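(* Let $H$ be a linear hypertree with maximum degree $\Delta(H)=2$ and anti-rank three. Then the niche number of $H$ is $\hat{n}(H)=0$; that is, there is an acyclic digraph $D$ with $NH(D)=H$.
   Context: All hypergraphs are finite, simple (if $e\subseteq e'$ are hyperedges then $e=e'$) and have no loops (hyperedges with one vertex); isolated vertices are allowed. The degree of a vertex is the number of hyperedges containing it, and $\Delta(H)$ is the maximum degree. The anti-rank of $H$ is the minimum number of vertices in a hyperedge. $H$ is linear if $|e\cap e'|\le 1$ for all distinct hyperedges $e,e'$. $H$ is a hypertree if there is a tree $T$ with $V(T)=V(H)$ such that for every hyperedge $e$ the induced subgraph $T[e]$ is connected. A digraph has arcs $(u,v)$ with no pair of opposite arcs; it is acyclic if it has no directed cycle. For a digraph $D$, $N^-_D(v)=\{u:(u,v)\in A(D)\}$ and $N^+_D(v)=\{u:(v,u)\in A(D)\}$. The niche hypergraph $NH(D)$ of an acyclic digraph $D$ has vertex set $V(D)$ and hyperedge set $\{e\subseteq V(D): |e|\ge 2 \text{ and } e=N^-_D(v) \text{ or } e=N^+_D(v) \text{ for some } v\in V(D)\}$. The niche number $\hat n(H)$ is the minimum $k\ge 0$ such that $H$ together with $k$ additional isolated vertices is the niche hypergraph of an acyclic digraph ($\infty$ if no such $k$ exists). *)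

theory Defs
  imports Main
begin

definition hypergraph :: "'a set \<Rightarrow> 'a set set \<Rightarrow> bool" where
  "hypergraph V E \<longleftrightarrow> finite V \<and> (\<forall>e\<in>E. e \<subseteq> V \<and> card e \<ge> 2)
     \<and> (\<forall>e\<in>E. \<forall>e'\<in>E. e \<subseteq> e' \<longrightarrow> e = e')"

definition hdegree :: "'a set set \<Rightarrow> 'a \<Rightarrow> nat" where
  "hdegree E v = card {e\<in>E. v \<in> e}"

definition max_degree :: "'a set \<Rightarrow> 'a set set \<Rightarrow> nat" where
  "max_degree V E = Max (hdegree E ` V)"

definition anti_rank :: "'a set set \<Rightarrow> nat" where
  "anti_rank E = Min (card ` E)"

definition linear_hg :: "'a set set \<Rightarrow> bool" where
  "linear_hg E \<longleftrightarrow> (\<forall>e\<in>E. \<forall>e'\<in>E. e \<noteq> e' \<longrightarrow> card (e \<inter> e') \<le> 1)"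

definition graph_connected_on :: "'a set set \<Rightarrow> 'a set \<Rightarrow> bool" where
  "graph_connected_on T S \<longleftrightarrow>
     (\<forall>u\<in>S. \<forall>v\<in>S. (u, v) \<in> ({(x, y). {x, y} \<in> T \<and> x \<in> S \<and> y \<in> S})\<^sup>*)"

definition induced :: "'a set set \<Rightarrow> 'a set \<Rightarrow> 'a set set" where
  "induced T S = {f\<in>T. f \<subseteq> S}"

definition is_tree :: "'a set \<Rightarrow> 'a set set \<Rightarrow> bool" where
  "is_tree V T \<longleftrightarrow> finite V \<and> V \<noteq> {}
     \<and> (\<forall>f\<in>T. f \<subseteq> V \<and> card f = 2)
     \<and> graph_connected_on T V \<and> card T = card V - 1"

definition hypertree :: "'a set \<Rightarrow> 'a set set \<Rightarrow> bool" where
  "hypertree V E \<longleftrightarrow> (\<exists>T. is_tree V T \<and>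
      (\<forall>e\<in>E. graph_connected_on (induced T e) e))"

definition digraph :: "'a set \<Rightarrow> ('a \<times> 'a) set \<Rightarrow> bool" where
  "digraph V A \<longleftrightarrow> A \<subseteq> V \<times> V \<and> (\<forall>u v. (u, v) \<in> A \<longrightarrow> (v, u) \<notin> A)"

definition acyclic_digraph :: "'a set \<Rightarrow> ('a \<times> 'a) set \<Rightarrow> bool" where
  "acyclic_digraph V A \<longleftrightarrow> digraph V A \<and> acyclic A"

definition in_nbh :: "('a \<times> 'a) set \<Rightarrow> 'a \<Rightarrow> 'a set" where
  "in_nbh A v = {u. (u, v) \<in> A}"

definition out_nbh :: "('a \<times> 'a) set \<Rightarrow> 'a \<Rightarrow> 'a set" where
  "out_nbh A v = {u. (v, u) \<in> A}"

text \<open>Hyperedge set of the niche hypergraph NH(D); its vertex set is V.\<close>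
definition niche_edges :: "'a set \<Rightarrow> ('a \<times> 'a) set \<Rightarrow> 'a set set" where
  "niche_edges V A = {e. e \<subseteq> V \<and> card e \<ge> 2 \<and>
      (\<exists>v\<in>V. e = in_nbh A v \<or> e = out_nbh A v)}"

end

theory Submission
  imports Defs Complex_Main
begin

definition solr :: "'a set \<Rightarrow> 'a set set \<Rightarrow> ('a \<times> 'a) set \<Rightarrow> ('a \<Rightarrow> real) \<Rightarrow> bool" where
  "solr U E A r \<longleftrightarrow> finite U \<and> A \<subseteq> U \<times> U \<and> (\<forall>(x,y)\<in>A. r x < r y)
     \<and> (\<forall>e\<in>E. e \<subseteq> U \<and> 2 \<le> card e \<and> (\<exists>v\<in>U. e = in_nbh A v \<or> e = out_nbh A v))
     \<and> (\<forall>v\<in>U. (2 \<le> card (in_nbh A v) \<longrightarrow> in_nbh A v \<in> E) \<and> (2 \<le> card (out_nbh A v) \<longrightarrow> out_nbh A v \<in> E))"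

definition sol :: "'a set \<Rightarrow> 'a set set \<Rightarrow> ('a \<times> 'a) set \<Rightarrow> bool" where
  "sol U E A \<longleftrightarrow> (\<exists>r. solr U E A r)"

definition clean :: "('a \<times> 'a) set \<Rightarrow> 'a \<Rightarrow> bool" where
  "clean A v \<longleftrightarrow> in_nbh A v = {} \<or> out_nbh A v = {}"

lemma in_nbh_Un[simp]: "in_nbh (A \<union> B) v = in_nbh A v \<union> in_nbh B v"
  by (auto simp: in_nbh_def)
lemma out_nbh_Un[simp]: "out_nbh (A \<union> B) v = out_nbh A v \<union> out_nbh B v"
  by (auto simp: out_nbh_def)
lemma in_nbh_conv[simp]: "in_nbh (A\<inverse>) v = out_nbh A v"
  by (auto simp: in_nbh_def out_nbh_def)
lemma out_nbh_conv[simp]: "out_nbh (A\<inverse>) v = in_nbh A v"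
  by (auto simp: in_nbh_def out_nbh_def)
lemma in_nbh_outside: "A \<subseteq> U \<times> U \<Longrightarrow> v \<notin> U \<Longrightarrow> in_nbh A v = {}"
  by (auto simp: in_nbh_def)
lemma out_nbh_outside: "A \<subseteq> U \<times> U \<Longrightarrow> v \<notin> U \<Longrightarrow> out_nbh A v = {}"
  by (auto simp: out_nbh_def)

lemma solr_conv: "solr U E A r \<Longrightarrow> solr U E (A\<inverse>) (\<lambda>v. - r v)"
  unfolding solr_def by auto

lemma sol_conv: "sol U E A \<Longrightarrow> sol U E (A\<inverse>)"
  unfolding sol_def using solr_conv by blast

lemma clean_conv[simp]: "clean (A\<inverse>) v = clean A v"
  by (auto simp: clean_def)

lemma glue_oriented:
  assumes s1: "solr U1 E1 A1 r1" and s2: "solr U2 E2 A2 r2" and I: "U1 \<inter> U2 \<subseteq> {z}"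
    and o1': "z \<in> U1 \<inter> U2 \<Longrightarrow> out_nbh A1 z = {}" and i2': "z \<in> U1 \<inter> U2 \<Longrightarrow> in_nbh A2 z = {}"
  shows "sol (U1 \<union> U2) (E1 \<union> E2) (A1 \<union> A2)"
proof -
  have f1: "finite U1" and A1U: "A1 \<subseteq> U1 \<times> U1" and r1: "\<And>x y. (x,y)\<in>A1 \<Longrightarrow> r1 x < r1 y"
    and e1: "\<And>e. e\<in>E1 \<Longrightarrow> e \<subseteq> U1 \<and> 2 \<le> card e \<and> (\<exists>v\<in>U1. e = in_nbh A1 v \<or> e = out_nbh A1 v)"
    and c1: "\<And>v. v\<in>U1 \<Longrightarrow> (2 \<le> card (in_nbh A1 v) \<longrightarrow> in_nbh A1 v \<in> E1) \<and> (2 \<le> card (out_nbh A1 v) \<longrightarrow> out_nbh A1 v \<in> E1)"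
    using s1 unfolding solr_def by auto
  have f2: "finite U2" and A2U: "A2 \<subseteq> U2 \<times> U2" and r2: "\<And>x y. (x,y)\<in>A2 \<Longrightarrow> r2 x < r2 y"
    and e2: "\<And>e. e\<in>E2 \<Longrightarrow> e \<subseteq> U2 \<and> 2 \<le> card e \<and> (\<exists>v\<in>U2. e = in_nbh A2 v \<or> e = out_nbh A2 v)"
    and c2: "\<And>v. v\<in>U2 \<Longrightarrow> (2 \<le> card (in_nbh A2 v) \<longrightarrow> in_nbh A2 v \<in> E2) \<and> (2 \<le> card (out_nbh A2 v) \<longrightarrow> out_nbh A2 v \<in> E2)"
    using s2 unfolding solr_def by auto
  define M1 where "M1 = Max (r1 ` U1)"
  define m2 where "m2 = Min (r2 ` U2)"
  define r where "r = (\<lambda>v. if v \<in> U1 \<inter> U2 then 0 else if v \<in> U1 then r1 v - M1 - 1 else r2 v - m2 + 1)"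
  have M1: "\<And>v. v \<in> U1 \<Longrightarrow> r1 v \<le> M1" unfolding M1_def using f1 by auto
  have m2: "\<And>v. v \<in> U2 \<Longrightarrow> m2 \<le> r2 v" unfolding m2_def using f2 by auto
  have rank: "\<forall>(x,y)\<in>A1 \<union> A2. r x < r y"
  proof (intro ballI, clarify)
    fix x y assume xy: "(x,y) \<in> A1 \<union> A2"
    show "r x < r y"
    proof (cases "(x,y) \<in> A1")
      case True
      have xU: "x \<in> U1" "y \<in> U1" using True A1U by auto
      have "x \<notin> U2"
      proof
        assume "x \<in> U2"
        hence "x = z" "z \<in> U1 \<inter> U2" using I xU by auto
        thus False using o1' True by (auto simp: out_nbh_def)
      qed
      thus ?thesis using r1[OF True] M1[of x] M1[of y] xU unfolding r_def by auto
    next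
      case False
      hence T: "(x,y) \<in> A2" using xy by auto
      have xU: "x \<in> U2" "y \<in> U2" using T A2U by auto
      have "y \<notin> U1"
      proof
        assume "y \<in> U1"
        hence "y = z" "z \<in> U1 \<inter> U2" using I xU by auto
        thus False using i2' T by (auto simp: in_nbh_def)
      qed
      thus ?thesis using r2[OF T] m2[of x] m2[of y] xU unfolding r_def by auto
    qed
  qed
  have in1: "\<And>v. v \<notin> U2 \<Longrightarrow> in_nbh A2 v = {}" "\<And>v. v \<notin> U2 \<Longrightarrow> out_nbh A2 v = {}"
    using A2U by (auto simp: in_nbh_def out_nbh_def)
  have in2: "\<And>v. v \<notin> U1 \<Longrightarrow> in_nbh A1 v = {}" "\<And>v. v \<notin> U1 \<Longrightarrow> out_nbh A1 v = {}"
    using A1U by (auto simp: in_nbh_def out_nbh_def)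
  have edges: "\<forall>e\<in>E1 \<union> E2. e \<subseteq> U1 \<union> U2 \<and> 2 \<le> card e \<and> (\<exists>v\<in>U1 \<union> U2. e = in_nbh (A1 \<union> A2) v \<or> e = out_nbh (A1 \<union> A2) v)"
  proof
    fix e assume "e \<in> E1 \<union> E2"
    then show "e \<subseteq> U1 \<union> U2 \<and> 2 \<le> card e \<and> (\<exists>v\<in>U1 \<union> U2. e = in_nbh (A1 \<union> A2) v \<or> e = out_nbh (A1 \<union> A2) v)"
    proof
      assume eE: "e \<in> E1"
      obtain v where v: "v \<in> U1" "e = in_nbh A1 v \<or> e = out_nbh A1 v" and ce: "2 \<le> card e" and eU: "e \<subseteq> U1"
        using e1[OF eE] by auto
      have "e \<noteq> {}" using ce by auto
      have "e = in_nbh (A1 \<union> A2) v \<or> e = out_nbh (A1 \<union> A2) v"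
      proof (cases "v \<in> U2")
        case True
        hence "v = z" "z \<in> U1 \<inter> U2" using I v by auto
        thus ?thesis using v o1' i2' \<open>e \<noteq> {}\<close> by auto
      next
        case False thus ?thesis using v in1 by auto
      qed
      thus ?thesis using v ce eU by auto
    next
      assume eE: "e \<in> E2"
      obtain v where v: "v \<in> U2" "e = in_nbh A2 v \<or> e = out_nbh A2 v" and ce: "2 \<le> card e" and eU: "e \<subseteq> U2"
        using e2[OF eE] by auto
      have "e \<noteq> {}" using ce by auto
      have "e = in_nbh (A1 \<union> A2) v \<or> e = out_nbh (A1 \<union> A2) v"
      proof (cases "v \<in> U1")
        case True
        hence "v = z" "z \<in> U1 \<inter> U2" using I v by auto
        thus ?thesis using v o1' i2' \<open>e \<noteq> {}\<close> by auto
      next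
        case False thus ?thesis using v in2 by auto
      qed
      thus ?thesis using v ce eU by auto
    qed
  qed
  have cards: "\<forall>v\<in>U1 \<union> U2. (2 \<le> card (in_nbh (A1 \<union> A2) v) \<longrightarrow> in_nbh (A1 \<union> A2) v \<in> E1 \<union> E2) \<and>
      (2 \<le> card (out_nbh (A1 \<union> A2) v) \<longrightarrow> out_nbh (A1 \<union> A2) v \<in> E1 \<union> E2)"
  proof
    fix v assume v: "v \<in> U1 \<union> U2"
    consider "v \<in> U1" "v \<notin> U2" | "v \<in> U2" "v \<notin> U1" | "v = z" "z \<in> U1 \<inter> U2" using I v by auto
    then show "(2 \<le> card (in_nbh (A1 \<union> A2) v) \<longrightarrow> in_nbh (A1 \<union> A2) v \<in> E1 \<union> E2) \<and>
      (2 \<le> card (out_nbh (A1 \<union> A2) v) \<longrightarrow> out_nbh (A1 \<union> A2) v \<in> E1 \<union> E2)"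
    proof cases
      case 1 thus ?thesis using c1[of v] in1[of v] by auto
    next
      case 2 thus ?thesis using c2[of v] in2[of v] by auto
    next
      case 3
      have a: "in_nbh (A1 \<union> A2) v = in_nbh A1 v" "out_nbh (A1 \<union> A2) v = out_nbh A2 v"
        using 3 o1' i2' by auto
      have b: "2 \<le> card (in_nbh A1 z) \<Longrightarrow> z \<in> U1" "2 \<le> card (out_nbh A2 z) \<Longrightarrow> z \<in> U2"
        using in2[of z] in1[of z] by fastforce+
      show ?thesis unfolding a using c1[of z] c2[of z] b 3 by auto
    qed
  qed
  have "solr (U1 \<union> U2) (E1 \<union> E2) (A1 \<union> A2) r"
    unfolding solr_def using f1 f2 A1U A2U rank edges cards by blast
  thus ?thesis unfolding sol_def by blast
qed

lemma glue0:
  assumes s1: "sol U1 E1 A1" and s2: "sol U2 E2 A2" and I: "U1 \<inter> U2 \<subseteq> {z}"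
    and cl1: "clean A1 z" and cl2: "clean A2 z"
  shows "\<exists>A. sol (U1 \<union> U2) (E1 \<union> E2) A \<and> (\<forall>v\<in>U1 - {z}. clean A1 v \<longrightarrow> clean A v)
     \<and> (\<forall>v\<in>U2 - {z}. clean A2 v \<longrightarrow> clean A v)"
proof -
  obtain r1 r2 where s1: "solr U1 E1 A1 r1" and s2: "solr U2 E2 A2 r2" using s1 s2 unfolding sol_def by blast
  have s1': "solr U1 E1 (A1\<inverse>) (\<lambda>v. - r1 v)" and s2': "solr U2 E2 (A2\<inverse>) (\<lambda>v. - r2 v)"
    using solr_conv s1 s2 by blast+
  have A1U: "A1 \<subseteq> U1 \<times> U1" and A2U: "A2 \<subseteq> U2 \<times> U2" using s1 s2 unfolding solr_def by auto
  have cl_un: "\<And>B1 B2 v. B1 \<subseteq> U1 \<times> U1 \<Longrightarrow> B2 \<subseteq> U2 \<times> U2 \<Longrightarrow> v \<in> U1 - {z} \<Longrightarrow> clean (B1 \<union> B2) v = clean B1 v"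
    using I by (auto simp: clean_def in_nbh_def out_nbh_def)
  have cl_un2: "\<And>B1 B2 v. B1 \<subseteq> U1 \<times> U1 \<Longrightarrow> B2 \<subseteq> U2 \<times> U2 \<Longrightarrow> v \<in> U2 - {z} \<Longrightarrow> clean (B1 \<union> B2) v = clean B2 v"
    using I by (auto simp: clean_def in_nbh_def out_nbh_def)
  have A1U': "A1\<inverse> \<subseteq> U1 \<times> U1" and A2U': "A2\<inverse> \<subseteq> U2 \<times> U2" using A1U A2U by auto
  have I': "U2 \<inter> U1 \<subseteq> {z}" using I by auto
  consider "out_nbh A1 z = {}" "in_nbh A2 z = {}" | "out_nbh A1 z = {}" "out_nbh A2 z = {}"
    | "in_nbh A1 z = {}" "in_nbh A2 z = {}" | "in_nbh A1 z = {}" "out_nbh A2 z = {}"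
    using cl1 cl2 unfolding clean_def by blast
  then show ?thesis
  proof cases
    case 1
    have "sol (U1 \<union> U2) (E1 \<union> E2) (A1 \<union> A2)" using glue_oriented[OF s1 s2 I] 1 by blast
    thus ?thesis using cl_un[OF A1U A2U] cl_un2[OF A1U A2U] by blast
  next
    case 2
    have "sol (U1 \<union> U2) (E1 \<union> E2) (A1 \<union> A2\<inverse>)" using glue_oriented[OF s1 s2' I] 2 by simp
    thus ?thesis using cl_un[OF A1U A2U'] cl_un2[OF A1U A2U'] by (metis clean_conv)
  next
    case 3
    have "sol (U1 \<union> U2) (E1 \<union> E2) (A1\<inverse> \<union> A2)" using glue_oriented[OF s1' s2 I] 3 by simp
    thus ?thesis using cl_un[OF A1U' A2U] cl_un2[OF A1U' A2U] by (metis clean_conv)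
  next
    case 4
    have "sol (U2 \<union> U1) (E2 \<union> E1) (A2 \<union> A1)" using glue_oriented[OF s2 s1 I'] 4 by blast
    hence "sol (U1 \<union> U2) (E1 \<union> E2) (A1 \<union> A2)" by (simp add: Un_commute)
    thus ?thesis using cl_un[OF A1U A2U] cl_un2[OF A1U A2U] by blast
  qed
qed

lemma glue:
  assumes s1: "sol U1 E1 A1" and s2: "sol U2 E2 A2" and I: "U1 \<inter> U2 \<subseteq> {z}"
    and cl: "z \<in> U1 \<inter> U2 \<Longrightarrow> clean A1 z \<and> clean A2 z"
  shows "\<exists>A. sol (U1 \<union> U2) (E1 \<union> E2) A \<and> (\<forall>v\<in>U1 - {z}. clean A1 v \<longrightarrow> clean A v)
     \<and> (\<forall>v\<in>U2 - {z}. clean A2 v \<longrightarrow> clean A v)"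
proof (cases "z \<in> U1 \<inter> U2")
  case True thus ?thesis using glue0[OF s1 s2 I] cl by blast
next
  case False
  obtain r1 r2 where s1: "solr U1 E1 A1 r1" and s2: "solr U2 E2 A2 r2" using s1 s2 unfolding sol_def by blast
  have A1U: "A1 \<subseteq> U1 \<times> U1" and A2U: "A2 \<subseteq> U2 \<times> U2" using s1 s2 unfolding solr_def by auto
  have "sol (U1 \<union> U2) (E1 \<union> E2) (A1 \<union> A2)" using glue_oriented[OF s1 s2 I] False by blast
  moreover have "\<forall>v\<in>U1 - {z}. clean A1 v \<longrightarrow> clean (A1 \<union> A2) v"
    using I A1U A2U by (auto simp: clean_def in_nbh_def out_nbh_def)
  moreover have "\<forall>v\<in>U2 - {z}. clean A2 v \<longrightarrow> clean (A1 \<union> A2) v"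
    using I A1U A2U by (auto simp: clean_def in_nbh_def out_nbh_def)
  ultimately show ?thesis by blast
qed

lemma addleaf:
  assumes s: "solr U E A r" and x: "x \<in> U" "out_nbh A x = {}" and u: "u \<in> U" "in_nbh A u = {}"
    and ru: "r x < r u" and Z: "Z \<inter> U = {}" "finite Z" "Z \<noteq> {}"
  shows "solr (U \<union> Z) (insert (insert x Z) E) (A \<union> (insert x Z \<times> {u}))
            (\<lambda>v. if v \<in> Z then (r x + r u)/2 else r v)"
    and "\<forall>v\<in>U - {u,x}. in_nbh (A \<union> (insert x Z \<times> {u})) v = in_nbh A v \<and>
            out_nbh (A \<union> (insert x Z \<times> {u})) v = out_nbh A v"
    and "\<forall>z\<in>Z. in_nbh (A \<union> (insert x Z \<times> {u})) z = {}"
proof -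
  define l where "l = insert x Z"
  define A' where "A' = A \<union> (l \<times> {u})"
  define r' where "r' = (\<lambda>v. if v \<in> Z then (r x + r u)/2 else r v)"
  have fU: "finite U" and AU: "A \<subseteq> U \<times> U" and rA: "\<And>a b. (a,b)\<in>A \<Longrightarrow> r a < r b"
    and e1: "\<And>e. e\<in>E \<Longrightarrow> e \<subseteq> U \<and> 2 \<le> card e \<and> (\<exists>v\<in>U. e = in_nbh A v \<or> e = out_nbh A v)"
    and c1: "\<And>v. v\<in>U \<Longrightarrow> (2 \<le> card (in_nbh A v) \<longrightarrow> in_nbh A v \<in> E) \<and> (2 \<le> card (out_nbh A v) \<longrightarrow> out_nbh A v \<in> E)"
    using s unfolding solr_def by auto
  have xu: "x \<noteq> u" using ru by auto
  have xZ: "x \<notin> Z" "u \<notin> Z" using Z x u by auto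
  have inA': "\<And>v. in_nbh A' v = in_nbh A v \<union> (if v = u then l else {})"
    unfolding A'_def by (auto simp: in_nbh_def)
  have outA': "\<And>v. out_nbh A' v = out_nbh A v \<union> (if v \<in> l then {u} else {})"
    unfolding A'_def by (auto simp: out_nbh_def)
  have outZ: "\<And>v. v \<notin> U \<Longrightarrow> out_nbh A v = {}" "\<And>v. v \<notin> U \<Longrightarrow> in_nbh A v = {}"
    using AU by (auto simp: in_nbh_def out_nbh_def)
  have cl: "card l \<ge> 2"
  proof -
    obtain z where "z \<in> Z" using Z by auto
    hence "{x,z} \<subseteq> l" unfolding l_def by auto
    moreover have "finite l" unfolding l_def using Z by auto
    ultimately have "card {x,z} \<le> card l" by (rule card_mono[rotated])
    moreover have "x \<noteq> z" using xZ \<open>z\<in>Z\<close> by auto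
    ultimately show ?thesis by simp
  qed
  have sol': "solr (U \<union> Z) (insert l E) A' r'"
    unfolding solr_def
  proof (intro conjI)
    show "finite (U \<union> Z)" using fU Z by auto
    show "A' \<subseteq> (U \<union> Z) \<times> (U \<union> Z)" unfolding A'_def l_def using AU x u by auto
    show "\<forall>(a,b)\<in>A'. r' a < r' b"
    proof clarify
      fix a b assume ab: "(a,b) \<in> A'"
      show "r' a < r' b"
      proof (cases "(a,b) \<in> A")
        case True
        hence "a \<in> U" "b \<in> U" using AU by auto
        hence "a \<notin> Z" "b \<notin> Z" using Z by auto
        thus ?thesis using rA[OF True] unfolding r'_def by auto
      next
        case False
        hence "a \<in> l" "b = u" using ab unfolding A'_def by auto
        thus ?thesis using ru xZ unfolding r'_def l_def by auto
      qed
    qed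
    show "\<forall>e\<in>insert l E. e \<subseteq> U \<union> Z \<and> 2 \<le> card e \<and> (\<exists>v\<in>U \<union> Z. e = in_nbh A' v \<or> e = out_nbh A' v)"
    proof
      fix e assume "e \<in> insert l E"
      then show "e \<subseteq> U \<union> Z \<and> 2 \<le> card e \<and> (\<exists>v\<in>U \<union> Z. e = in_nbh A' v \<or> e = out_nbh A' v)"
      proof
        assume "e = l"
        moreover have "in_nbh A' u = l" using inA' u by auto
        ultimately show ?thesis using cl u x unfolding l_def by auto
      next
        assume eE: "e \<in> E"
        obtain v where v: "v \<in> U" "e = in_nbh A v \<or> e = out_nbh A v" and ce: "2 \<le> card e" and eU: "e \<subseteq> U"
          using e1[OF eE] by auto
        have "e \<noteq> {}" using ce by auto
        have vZ: "v \<notin> Z" using v(1) Z by auto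
        have "e = in_nbh A' v \<or> e = out_nbh A' v"
        proof (cases "v = u")
          case True
          hence "e = out_nbh A v" using v u \<open>e \<noteq> {}\<close> by auto
          moreover have "v \<notin> l" using True xu xZ unfolding l_def by auto
          ultimately show ?thesis using outA'[of v] by auto
        next
          case False
          show ?thesis
          proof (cases "e = in_nbh A v")
            case True thus ?thesis using inA'[of v] False by auto
          next
            case F2: False
            hence "e = out_nbh A v" using v by auto
            hence "v \<noteq> x" using x \<open>e \<noteq> {}\<close> by auto
            hence "v \<notin> l" using vZ unfolding l_def by auto
            thus ?thesis using outA'[of v] \<open>e = out_nbh A v\<close> by auto
          qed
        qed
        thus ?thesis using v ce eU by auto
      qed
    qed
    show "\<forall>v\<in>U \<union> Z. (2 \<le> card (in_nbh A' v) \<longrightarrow> in_nbh A' v \<in> insert l E) \<and>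
        (2 \<le> card (out_nbh A' v) \<longrightarrow> out_nbh A' v \<in> insert l E)"
    proof
      fix v assume v: "v \<in> U \<union> Z"
      have i: "2 \<le> card (in_nbh A' v) \<longrightarrow> in_nbh A' v \<in> insert l E"
      proof (cases "v = u")
        case True thus ?thesis using inA'[of v] u by auto
      next
        case False
        hence "in_nbh A' v = in_nbh A v" using inA' by auto
        thus ?thesis using c1[of v] outZ[of v] by (cases "v \<in> U") auto
      qed
      have o: "2 \<le> card (out_nbh A' v) \<longrightarrow> out_nbh A' v \<in> insert l E"
      proof (cases "v \<in> l")
        case True
        hence "out_nbh A' v = {u}" using outA'[of v] x outZ[of v] Z unfolding l_def by (cases "v = x") auto
        thus ?thesis by auto
      next
        case False
        hence "out_nbh A' v = out_nbh A v" using outA' by auto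
        thus ?thesis using c1[of v] outZ[of v] by (cases "v \<in> U") auto
      qed
      show "(2 \<le> card (in_nbh A' v) \<longrightarrow> in_nbh A' v \<in> insert l E) \<and>
        (2 \<le> card (out_nbh A' v) \<longrightarrow> out_nbh A' v \<in> insert l E)" using i o by blast
    qed
  qed
  thus "solr (U \<union> Z) (insert (insert x Z) E) (A \<union> (insert x Z \<times> {u}))
            (\<lambda>v. if v \<in> Z then (r x + r u)/2 else r v)" unfolding l_def A'_def r'_def .
  show "\<forall>v\<in>U - {u,x}. in_nbh (A \<union> (insert x Z \<times> {u})) v = in_nbh A v \<and>
            out_nbh (A \<union> (insert x Z \<times> {u})) v = out_nbh A v"
    using inA' outA' Z unfolding A'_def l_def by auto
  show "\<forall>z\<in>Z. in_nbh (A \<union> (insert x Z \<times> {u})) z = {}"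
  proof
    fix z assume z: "z \<in> Z"
    hence "z \<notin> U" "z \<noteq> u" using Z xZ by auto
    thus "in_nbh (A \<union> (insert x Z \<times> {u})) z = {}" using inA'[of z] outZ(2)[of z] unfolding A'_def l_def by simp
  qed
qed

lemma card_le1_sub: "S \<subseteq> {a} \<Longrightarrow> card S \<le> 1"
  using card_mono[of "{a}" S] by simp

lemma pair_gadget:
  assumes fc: "finite c" and ff: "finite f0" and cf: "c \<inter> f0 = {x0}" and a: "a \<in> f0" "a \<noteq> x0"
    and b: "b \<in> c" "b \<noteq> x0" and cc: "2 \<le> card c" and cf0: "2 \<le> card f0"
  shows "\<exists>A. sol (c \<union> f0) {c, f0} A \<and> (\<forall>v\<in>(c - f0) \<union> (f0 - c). clean A v)"
proof -
  define A where "A = ({a} \<times> c) \<union> (f0 \<times> {b})"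
  define r :: "'a \<Rightarrow> real" where "r = (\<lambda>v. if v = a then 0 else if v = b then 2 else if v \<in> c then 1 else 0)"
  have x0: "x0 \<in> c" "x0 \<in> f0" using cf by auto
  have ac: "a \<notin> c" using a cf by auto
  have bf: "b \<notin> f0" using b cf by auto
  have inA: "\<And>v. in_nbh A v = (if v \<in> c then {a} else {}) \<union> (if v = b then f0 else {})"
    unfolding A_def by (auto simp: in_nbh_def)
  have outA: "\<And>v. out_nbh A v = (if v = a then c else {}) \<union> (if v \<in> f0 then {b} else {})"
    unfolding A_def by (auto simp: out_nbh_def)
  have s: "solr (c \<union> f0) {c, f0} A r"
    unfolding solr_def
  proof (intro conjI)
    show "finite (c \<union> f0)" using fc ff by auto
    show "A \<subseteq> (c \<union> f0) \<times> (c \<union> f0)" unfolding A_def using a b by auto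
    show "\<forall>(x,y)\<in>A. r x < r y"
    proof clarify
      fix x y assume "(x,y) \<in> A"
      hence "(x = a \<and> y \<in> c) \<or> (x \<in> f0 \<and> y = b)" unfolding A_def by auto
      thus "r x < r y"
      proof
        assume h: "x = a \<and> y \<in> c"
        hence "y \<noteq> a" using ac by auto
        thus ?thesis using h unfolding r_def by auto
      next
        assume h: "x \<in> f0 \<and> y = b"
        hence "x \<noteq> b" using bf by auto
        moreover have "a \<noteq> b" using ac b by auto
        ultimately show ?thesis using h unfolding r_def by auto
      qed
    qed
    show "\<forall>e\<in>{c, f0}. e \<subseteq> c \<union> f0 \<and> 2 \<le> card e \<and> (\<exists>v\<in>c \<union> f0. e = in_nbh A v \<or> e = out_nbh A v)"
    proof -
      have "out_nbh A a = c" using outA[of a] a b by auto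
      moreover have "in_nbh A b = f0" using inA[of b] a b by auto
      ultimately show ?thesis using a b cc cf0 by blast
    qed
    show "\<forall>v\<in>c \<union> f0. (2 \<le> card (in_nbh A v) \<longrightarrow> in_nbh A v \<in> {c, f0}) \<and> (2 \<le> card (out_nbh A v) \<longrightarrow> out_nbh A v \<in> {c, f0})"
    proof
      fix v assume "v \<in> c \<union> f0"
      have i: "2 \<le> card (in_nbh A v) \<longrightarrow> in_nbh A v \<in> {c, f0}"
      proof (cases "v = b")
        case True thus ?thesis using inA[of v] a b by auto
      next
        case False
        hence "in_nbh A v \<subseteq> {a}" using inA[of v] by auto
        hence "card (in_nbh A v) \<le> 1" by (rule card_le1_sub)
        thus ?thesis by simp
      qed
      have o: "2 \<le> card (out_nbh A v) \<longrightarrow> out_nbh A v \<in> {c, f0}"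
      proof (cases "v = a")
        case True thus ?thesis using outA[of v] a b by auto
      next
        case False
        hence "out_nbh A v \<subseteq> {b}" using outA[of v] by auto
        hence "card (out_nbh A v) \<le> 1" by (rule card_le1_sub)
        thus ?thesis by simp
      qed
      show "(2 \<le> card (in_nbh A v) \<longrightarrow> in_nbh A v \<in> {c, f0}) \<and> (2 \<le> card (out_nbh A v) \<longrightarrow> out_nbh A v \<in> {c, f0})"
        using i o by blast
    qed
  qed
  have cl: "\<forall>v\<in>(c - f0) \<union> (f0 - c). clean A v"
  proof
    fix v assume v: "v \<in> (c - f0) \<union> (f0 - c)"
    show "clean A v"
    proof (cases "v \<in> c")
      case True
      hence "v \<noteq> a" "v \<notin> f0" using ac v by auto
      thus ?thesis unfolding clean_def using outA[of v] by auto
    next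
      case False
      hence "v \<noteq> b" using b by auto
      thus ?thesis unfolding clean_def using inA[of v] False by auto
    qed
  qed
  show ?thesis using s cl unfolding sol_def by blast
qed

lemma gadget2:
  assumes fc: "finite c" and ff0: "finite f0" and ff1: "finite f1"
    and cf0: "c \<inter> f0 = {x0}" and cf1: "c \<inter> f1 = {x1}" and d: "f0 \<inter> f1 = {}"
    and a: "a \<in> f1" "a \<noteq> x1" and b: "b \<in> f1" "b \<noteq> x1" and ab: "a \<noteq> b"
    and cc: "2 \<le> card c" and c0: "2 \<le> card f0" and c1: "2 \<le> card f1"
  shows "\<exists>A r. solr (c \<union> f0 \<union> f1) {c, f0, f1} A r \<and> in_nbh A b = {} \<and> r b = 5/2 \<and>
     (\<forall>y\<in>c - (f0 \<union> f1). out_nbh A y = {} \<and> r y = 2 \<and> clean A y) \<and> (\<forall>v\<in>f0 - c. clean A v)"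
proof -
  define A where "A = ({a} \<times> c) \<union> ({x1} \<times> f0) \<union> (f1 \<times> {x0})"
  define r :: "'a \<Rightarrow> real" where
    "r = (\<lambda>v. if v = a then 0 else if v = x1 then 1 else if v = x0 then 3 else if v \<in> f1 then 5/2 else 2)"
  have x0: "x0 \<in> c" "x0 \<in> f0" "x0 \<notin> f1" using cf0 d by auto
  have x1: "x1 \<in> c" "x1 \<in> f1" "x1 \<notin> f0" using cf1 d by auto
  have ac: "a \<notin> c" "a \<notin> f0" using a cf1 d by auto
  have bc: "b \<notin> c" "b \<notin> f0" using b cf1 d by auto
  have x01: "x0 \<noteq> x1" "x0 \<noteq> a" "x1 \<noteq> a" "x0 \<noteq> b" using x0 x1 a ac b by auto
  have inA: "\<And>v. in_nbh A v = (if v \<in> c then {a} else {}) \<union> (if v \<in> f0 then {x1} else {}) \<union> (if v = x0 then f1 else {})"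
    unfolding A_def by (auto simp: in_nbh_def)
  have outA: "\<And>v. out_nbh A v = (if v = a then c else {}) \<union> (if v = x1 then f0 else {}) \<union> (if v \<in> f1 then {x0} else {})"
    unfolding A_def by (auto simp: out_nbh_def)
  have oa: "out_nbh A a = c" using outA[of a] x01 a x0 by auto
  have ox1: "out_nbh A x1 = f0" using outA[of x1] x01 x1 x0 by auto
  have ix0: "in_nbh A x0 = f1" using inA[of x0] x0 a x1 by auto
  have s: "solr (c \<union> f0 \<union> f1) {c, f0, f1} A r"
    unfolding solr_def
  proof (intro conjI)
    show "finite (c \<union> f0 \<union> f1)" using fc ff0 ff1 by auto
    show "A \<subseteq> (c \<union> f0 \<union> f1) \<times> (c \<union> f0 \<union> f1)" unfolding A_def using a x0 x1 by auto
    show "\<forall>(x,y)\<in>A. r x < r y"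
    proof clarify
      fix x y assume "(x,y) \<in> A"
      hence "(x = a \<and> y \<in> c) \<or> (x = x1 \<and> y \<in> f0) \<or> (x \<in> f1 \<and> y = x0)" unfolding A_def by auto
      thus "r x < r y"
      proof (elim disjE)
        assume h: "x = a \<and> y \<in> c"
        hence "y \<noteq> a" using ac by auto
        moreover have "y \<noteq> x1 \<Longrightarrow> y \<notin> f1" using h cf1 by auto
        ultimately show ?thesis using h unfolding r_def by auto
      next
        assume h: "x = x1 \<and> y \<in> f0"
        hence "y \<noteq> a" "y \<noteq> x1" "y \<notin> f1" using ac x1 d by auto
        thus ?thesis using h x01 unfolding r_def by auto
      next
        assume h: "x \<in> f1 \<and> y = x0"
        hence "x \<noteq> x0" using x0 by auto
        thus ?thesis using h x01 unfolding r_def by auto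
      qed
    qed
    show "\<forall>e\<in>{c, f0, f1}. e \<subseteq> c \<union> f0 \<union> f1 \<and> 2 \<le> card e \<and> (\<exists>v\<in>c \<union> f0 \<union> f1. e = in_nbh A v \<or> e = out_nbh A v)"
      using oa ox1 ix0 cc c0 c1 a x1 x0 by blast
    show "\<forall>v\<in>c \<union> f0 \<union> f1. (2 \<le> card (in_nbh A v) \<longrightarrow> in_nbh A v \<in> {c, f0, f1}) \<and> (2 \<le> card (out_nbh A v) \<longrightarrow> out_nbh A v \<in> {c, f0, f1})"
    proof
      fix v assume "v \<in> c \<union> f0 \<union> f1"
      have i: "2 \<le> card (in_nbh A v) \<longrightarrow> in_nbh A v \<in> {c, f0, f1}"
      proof (cases "v = x0")
        case True thus ?thesis using ix0 by auto
      next
        case False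
        show ?thesis
        proof (cases "v \<in> f0")
          case True
          hence "v \<notin> c" using cf0 False by auto
          hence "in_nbh A v \<subseteq> {x1}" using inA[of v] False by auto
          hence "card (in_nbh A v) \<le> 1" by (rule card_le1_sub)
          thus ?thesis by simp
        next
          case F2: False
          hence "in_nbh A v \<subseteq> {a}" using inA[of v] False by auto
          hence "card (in_nbh A v) \<le> 1" by (rule card_le1_sub)
          thus ?thesis by simp
        qed
      qed
      have o: "2 \<le> card (out_nbh A v) \<longrightarrow> out_nbh A v \<in> {c, f0, f1}"
      proof (cases "v = a \<or> v = x1")
        case True thus ?thesis using oa ox1 by auto
      next
        case False
        hence "out_nbh A v \<subseteq> {x0}" using outA[of v] by auto
        hence "card (out_nbh A v) \<le> 1" by (rule card_le1_sub)
        thus ?thesis by simp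
      qed
      show "(2 \<le> card (in_nbh A v) \<longrightarrow> in_nbh A v \<in> {c, f0, f1}) \<and> (2 \<le> card (out_nbh A v) \<longrightarrow> out_nbh A v \<in> {c, f0, f1})"
        using i o by blast
    qed
  qed
  have ib: "in_nbh A b = {}" using inA[of b] bc x01 by auto
  have rb: "r b = 5/2" using b ab x01 unfolding r_def by auto
  have fr: "\<forall>y\<in>c - (f0 \<union> f1). out_nbh A y = {} \<and> r y = 2 \<and> clean A y"
  proof
    fix y assume y: "y \<in> c - (f0 \<union> f1)"
    hence "y \<noteq> a" "y \<noteq> x1" "y \<noteq> x0" using ac x1 x0 by auto
    hence "out_nbh A y = {}" using outA[of y] y by auto
    moreover have "r y = 2" using y \<open>y \<noteq> a\<close> \<open>y \<noteq> x1\<close> \<open>y \<noteq> x0\<close> unfolding r_def by auto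
    ultimately show "out_nbh A y = {} \<and> r y = 2 \<and> clean A y" unfolding clean_def by auto
  qed
  have f0c: "\<forall>v\<in>f0 - c. clean A v"
  proof
    fix v assume v: "v \<in> f0 - c"
    hence "v \<noteq> a" "v \<noteq> x1" "v \<notin> f1" using ac x1 d by auto
    hence "out_nbh A v = {}" using outA[of v] by auto
    thus "clean A v" unfolding clean_def by auto
  qed
  show ?thesis using s ib rb fr f0c by blast
qed

lemma star:
  assumes fL: "finite L" and f0L: "f0 \<in> L" and cL: "c \<notin> L" and fc: "finite c" and cc: "2 \<le> card c"
    and lv: "\<forall>l\<in>L. finite l \<and> 3 \<le> card l \<and> (\<exists>x. c \<inter> l = {x})"
    and disj: "\<forall>l\<in>L. \<forall>l'\<in>L. l \<noteq> l' \<longrightarrow> l \<inter> l' = {}"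
  shows "\<exists>A. sol (c \<union> \<Union>L) (insert c L) A \<and> (\<forall>v\<in>(c - \<Union>L) \<union> (f0 - c). clean A v)"
proof -
  obtain x0 where x0: "c \<inter> f0 = {x0}" using lv f0L by blast
  have ff0: "finite f0" "3 \<le> card f0" using lv f0L by auto
  show ?thesis
  proof (cases "L = {f0}")
    case True
    have "card (f0 - {x0}) \<ge> 2" using ff0 x0 by (auto simp: card_Diff_singleton_if)
    then obtain a where a: "a \<in> f0" "a \<noteq> x0" by (metis Diff_iff card.empty ex_in_conv insertI1 not_numeral_le_zero)
    have "card (c - {x0}) \<ge> 1" using cc x0 fc by (auto simp: card_Diff_singleton_if)
    then obtain b where b: "b \<in> c" "b \<noteq> x0" by (metis Diff_iff card.empty ex_in_conv insertI1 not_one_le_zero)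
    have "\<exists>A. sol (c \<union> f0) {c, f0} A \<and> (\<forall>v\<in>(c - f0) \<union> (f0 - c). clean A v)"
      by (rule pair_gadget[OF fc ff0(1) x0 a b cc]) (use ff0 in auto)
    thus ?thesis using True by auto
  next
    case False
    then obtain f1 where f1: "f1 \<in> L" "f1 \<noteq> f0" using f0L by blast
    obtain x1 where x1: "c \<inter> f1 = {x1}" using lv f1 by blast
    have ff1: "finite f1" "3 \<le> card f1" using lv f1 by auto
    have d01: "f0 \<inter> f1 = {}" using disj f0L f1 by auto
    have "card (f1 - {x1}) \<ge> 2" using ff1 x1 by (auto simp: card_Diff_singleton_if)
    moreover have "finite (f1 - {x1})" using ff1 by auto
    ultimately have "\<not> (\<forall>a\<in>f1-{x1}. \<forall>b\<in>f1-{x1}. a = b)" using card_le_Suc0_iff_eq[of "f1 - {x1}"] by auto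
    then obtain a b where ab: "a \<in> f1 - {x1}" "b \<in> f1 - {x1}" "a \<noteq> b" by blast
    obtain A0 r0 where g: "solr (c \<union> f0 \<union> f1) {c, f0, f1} A0 r0" "in_nbh A0 b = {}" "r0 b = 5/2"
      "\<forall>y\<in>c - (f0 \<union> f1). out_nbh A0 y = {} \<and> r0 y = 2 \<and> clean A0 y" "\<forall>v\<in>f0 - c. clean A0 v"
      using gadget2[OF fc ff0(1) ff1(1) x0 x1 d01, of a b] ab cc ff0 ff1 by auto
    define R where "R = L - {f0, f1}"
    define P where "P = (\<lambda>S. \<exists>A r u. solr (c \<union> f0 \<union> f1 \<union> \<Union>S) (insert c (insert f0 (insert f1 S))) A r
       \<and> u \<in> c \<union> f0 \<union> f1 \<union> \<Union>S \<and> u \<notin> c \<and> u \<notin> f0 \<and> in_nbh A u = {} \<and> 2 < r u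
       \<and> (\<forall>y\<in>c - (f0 \<union> f1 \<union> \<Union>S). out_nbh A y = {} \<and> r y = 2 \<and> clean A y) \<and> (\<forall>v\<in>f0 - c. clean A v))"
    have fR: "finite R" using fL unfolding R_def by auto
    have PR: "P R"
      using fR subset_refl
    proof (induction R rule: finite_subset_induct')
      case empty
      have "b \<notin> c" "b \<notin> f0" using ab x1 d01 by auto
      thus ?case unfolding P_def using g ab by (intro exI[of _ A0] exI[of _ r0] exI[of _ b]) auto
    next
      case (insert l F)
      obtain A r u where IH: "solr (c \<union> f0 \<union> f1 \<union> \<Union>F) (insert c (insert f0 (insert f1 F))) A r"
        "u \<in> c \<union> f0 \<union> f1 \<union> \<Union>F" "u \<notin> c" "u \<notin> f0" "in_nbh A u = {}" "2 < r u"
        "\<forall>y\<in>c - (f0 \<union> f1 \<union> \<Union>F). out_nbh A y = {} \<and> r y = 2 \<and> clean A y" "\<forall>v\<in>f0 - c. clean A v"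
        using insert.IH unfolding P_def by blast
      have lL: "l \<in> L" "l \<noteq> f0" "l \<noteq> f1" using insert.hyps unfolding R_def by auto
      have FL: "F \<subseteq> L" "f0 \<notin> F" "f1 \<notin> F" using insert.hyps unfolding R_def by auto
      obtain x where x: "c \<inter> l = {x}" using lv lL by blast
      have fl: "finite l" "3 \<le> card l" using lv lL by auto
      define U where "U = c \<union> f0 \<union> f1 \<union> \<Union>F"
      define Z where "Z = l - {x}"
      have dl: "\<And>l'. l' \<in> L \<Longrightarrow> l' \<noteq> l \<Longrightarrow> l \<inter> l' = {}" using disj lL by auto
      have xfree: "x \<in> c - (f0 \<union> f1 \<union> \<Union>F)"
      proof -
        have "x \<in> l" "x \<in> c" using x by auto
        moreover have "x \<notin> f0" "x \<notin> f1" using dl[of f0] dl[of f1] lL f0L f1 \<open>x\<in>l\<close> by auto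
        moreover have "x \<notin> \<Union>F" using dl FL insert.hyps \<open>x\<in>l\<close> by blast
        ultimately show ?thesis by auto
      qed
      have xU: "x \<in> U" "out_nbh A x = {}" "r x = 2" using xfree IH(7) unfolding U_def by auto
      have uU: "u \<in> U" using IH(2) unfolding U_def by auto
      have ZU: "Z \<inter> U = {}"
      proof -
        have "Z \<inter> c = {}" using x unfolding Z_def by auto
        moreover have "Z \<inter> f0 = {}" "Z \<inter> f1 = {}" using dl[of f0] dl[of f1] lL f0L f1 unfolding Z_def by auto
        moreover have "Z \<inter> \<Union>F = {}" using dl FL insert.hyps unfolding Z_def by blast
        ultimately show ?thesis unfolding U_def by auto
      qed
      have Zf: "finite Z" using fl unfolding Z_def by auto
      have Zne: "Z \<noteq> {}"
      proof
        assume "Z = {}"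
        hence "l \<subseteq> {x}" unfolding Z_def by auto
        hence "card l \<le> 1" by (rule card_le1_sub)
        thus False using fl by auto
      qed
      have lxZ: "insert x Z = l" using x unfolding Z_def by auto
      have ru: "r x < r u" using xU IH(6) by auto
      note AL = addleaf[OF IH(1)[folded U_def] xU(1,2) uU IH(5) ru ZU Zf Zne]
      obtain u' where u': "u' \<in> Z" using Zne by auto
      define A' where "A' = A \<union> (insert x Z \<times> {u})"
      define r' where "r' = (\<lambda>v. if v \<in> Z then (r x + r u)/2 else r v)"
      have s': "solr (c \<union> f0 \<union> f1 \<union> \<Union>(insert l F)) (insert c (insert f0 (insert f1 (insert l F)))) A' r'"
      proof -
        have "U \<union> Z = c \<union> f0 \<union> f1 \<union> \<Union>(insert l F)" using lxZ x unfolding U_def by auto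
        moreover have "insert (insert x Z) (insert c (insert f0 (insert f1 F))) = insert c (insert f0 (insert f1 (insert l F)))"
          using lxZ by auto
        ultimately show ?thesis using AL(1) unfolding A'_def r'_def by simp
      qed
      have u'p: "u' \<in> c \<union> f0 \<union> f1 \<union> \<Union>(insert l F)" "u' \<notin> c" "u' \<notin> f0"
        using u' ZU lxZ unfolding U_def by auto
      have u'i: "in_nbh A' u' = {}" using AL(3) u' unfolding A'_def by auto
      have u'r: "2 < r' u'" using u' xU IH(6) unfolding r'_def by auto
      have unch: "\<And>v. v \<in> U - {u,x} \<Longrightarrow> in_nbh A' v = in_nbh A v \<and> out_nbh A' v = out_nbh A v"
        using AL(2) unfolding A'_def by blast
      have fr: "\<forall>y\<in>c - (f0 \<union> f1 \<union> \<Union>(insert l F)). out_nbh A' y = {} \<and> r' y = 2 \<and> clean A' y"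
      proof
        fix y assume y: "y \<in> c - (f0 \<union> f1 \<union> \<Union>(insert l F))"
        hence yU: "y \<in> U - {u,x}" using IH(3) x unfolding U_def by auto
        have "y \<notin> Z" using yU ZU by auto
        hence "r' y = r y" unfolding r'_def by auto
        moreover have "y \<in> c - (f0 \<union> f1 \<union> \<Union>F)" using y by auto
        ultimately show "out_nbh A' y = {} \<and> r' y = 2 \<and> clean A' y"
          using unch[OF yU] IH(7) unfolding clean_def by auto
      qed
      have f0c: "\<forall>v\<in>f0 - c. clean A' v"
      proof
        fix v assume v: "v \<in> f0 - c"
        hence vU: "v \<in> U - {u,x}" using IH(4) xfree unfolding U_def by auto
        show "clean A' v" using unch[OF vU] IH(8) v unfolding clean_def by auto
      qed
      show ?case unfolding P_def
        using s' u'p u'i u'r fr f0c by blast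
    qed
    have LR: "L = insert f0 (insert f1 R)" using f0L f1 unfolding R_def by auto
    obtain A r u where fin: "solr (c \<union> f0 \<union> f1 \<union> \<Union>R) (insert c (insert f0 (insert f1 R))) A r"
       "\<forall>y\<in>c - (f0 \<union> f1 \<union> \<Union>R). out_nbh A y = {} \<and> r y = 2 \<and> clean A y" "\<forall>v\<in>f0 - c. clean A v"
      using PR unfolding P_def by blast
    have e1: "c \<union> f0 \<union> f1 \<union> \<Union>R = c \<union> \<Union>L" using LR by auto
    have e2: "insert c (insert f0 (insert f1 R)) = insert c L" using LR by auto
    have "sol (c \<union> \<Union>L) (insert c L) A" using fin(1) unfolding e1 e2 sol_def by blast
    moreover have "\<forall>v\<in>(c - \<Union>L) \<union> (f0 - c). clean A v" using fin(2,3) LR by auto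
    ultimately show ?thesis by blast
  qed
qed

definition nbrs :: "'a set set \<Rightarrow> 'a set \<Rightarrow> 'a set set" where
  "nbrs E g = {h\<in>E. h \<noteq> g \<and> h \<inter> g \<noteq> {}}"
definition Lrel :: "'a set set \<Rightarrow> ('a set \<times> 'a set) set" where
  "Lrel E = {(a,b). a \<in> E \<and> b \<in> E \<and> a \<noteq> b \<and> a \<inter> b \<noteq> {}}"
definition deg :: "'a set set \<Rightarrow> 'a \<Rightarrow> nat" where
  "deg E v = card {e\<in>E. v \<in> e}"
definition FP :: "'a set set \<Rightarrow> bool" where
  "FP E \<longleftrightarrow> (\<forall>p\<in>E. \<forall>q\<in>E. p \<noteq> q \<longrightarrow> p \<inter> q \<noteq> {} \<longrightarrow> (q,p) \<notin> (Lrel E - {(p,q),(q,p)})\<^sup>*)"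
definition Cls :: "'a set set \<Rightarrow> bool" where
  "Cls E \<longleftrightarrow> finite E \<and> (\<forall>e\<in>E. finite e \<and> 3 \<le> card e) \<and> (\<forall>e\<in>E. \<forall>f\<in>E. e \<noteq> f \<longrightarrow> card (e \<inter> f) \<le> 1)
     \<and> (\<forall>v. deg E v \<le> 2) \<and> FP E \<and> (\<forall>e\<in>E. nbrs E e \<noteq> {})"
definition Wset :: "'a set set \<Rightarrow> 'a set \<Rightarrow> 'a set" where
  "Wset E g = {v. deg E v = 1 \<and> (v \<in> g \<or> (\<exists>h. nbrs E g = {h} \<and> v \<in> h))}"

lemma Cls_three:
  assumes C: "Cls E" and e: "e \<in> E" "f \<in> E" "h \<in> E" "e \<noteq> f" and v: "v \<in> e" "v \<in> f" "v \<in> h"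
  shows "h = e \<or> h = f"
proof (rule ccontr)
  assume "\<not> (h = e \<or> h = f)"
  hence "e \<notin> {f,h}" "f \<notin> {h}" using e by auto
  hence "card {e,f,h} = 3" by simp
  moreover have "{e,f,h} \<subseteq> {x\<in>E. v \<in> x}" using e v by auto
  moreover have "finite {x\<in>E. v \<in> x}" using C unfolding Cls_def by auto
  ultimately have "card {e,f,h} \<le> deg E v" unfolding deg_def using card_mono by blast
  hence "3 \<le> deg E v" using \<open>card {e,f,h} = 3\<close> by simp
  moreover have "deg E v \<le> 2" using C unfolding Cls_def by blast
  ultimately show False by linarith
qed

lemma Cls_lin:
  assumes C: "Cls E" and e: "e \<in> E" "f \<in> E" "e \<noteq> f" and u: "u \<in> e" "u \<in> f" and v: "v \<in> e" "v \<in> f"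
  shows "u = v"
proof (rule ccontr)
  assume "u \<noteq> v"
  hence "card {u,v} = 2" by (simp add: card_insert_if)
  moreover have "{u,v} \<subseteq> e \<inter> f" using u v by auto
  moreover have "finite (e \<inter> f)" using C e unfolding Cls_def by auto
  ultimately have "card {u,v} \<le> card (e \<inter> f)" using card_mono by blast
  hence "2 \<le> card (e \<inter> f)" using \<open>card {u,v} = 2\<close> by simp
  moreover have "card (e \<inter> f) \<le> 1" using C e unfolding Cls_def by blast
  ultimately show False by linarith
qed

lemma deg1_iff:
  assumes C: "Cls E" and g: "g \<in> E" "v \<in> g"
  shows "deg E v = 1 \<longleftrightarrow> (\<forall>f\<in>E. v \<in> f \<longrightarrow> f = g)"
proof
  assume d: "deg E v = 1"
  show "\<forall>f\<in>E. v \<in> f \<longrightarrow> f = g"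
  proof (intro ballI impI)
    fix f assume f: "f \<in> E" "v \<in> f"
    show "f = g"
    proof (rule ccontr)
      assume "f \<noteq> g"
      hence "card {f,g} = 2" by (simp add: card_insert_if)
      moreover have "{f,g} \<subseteq> {x\<in>E. v \<in> x}" using f g by auto
      moreover have "finite {x\<in>E. v \<in> x}" using C unfolding Cls_def by auto
      ultimately have "card {f,g} \<le> deg E v" unfolding deg_def using card_mono by blast
      hence "2 \<le> deg E v" using \<open>card {f,g} = 2\<close> by simp
      thus False using d by auto
    qed
  qed
next
  assume "\<forall>f\<in>E. v \<in> f \<longrightarrow> f = g"
  hence "{x\<in>E. v \<in> x} = {g}" using g by blast
  thus "deg E v = 1" unfolding deg_def by simp
qed

lemma deg2_of:
  assumes C: "Cls E" and e: "e \<in> E" "f \<in> E" "e \<noteq> f" "v \<in> e" "v \<in> f"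
  shows "deg E v \<noteq> 1"
  using deg1_iff[OF C e(1,4)] e by auto

lemma nbrs_sub: "A \<subseteq> E \<Longrightarrow> nbrs A a = nbrs E a \<inter> A"
  unfolding nbrs_def by auto

lemma FP_mono: "FP E \<Longrightarrow> A \<subseteq> E \<Longrightarrow> FP A"
proof -
  assume F: "FP E" and A: "A \<subseteq> E"
  have m: "(Lrel A - X)\<^sup>* \<subseteq> (Lrel E - X)\<^sup>*" for X
    by (rule rtrancl_mono) (use A in \<open>auto simp: Lrel_def\<close>)
  show "FP A" unfolding FP_def
  proof (intro ballI impI)
    fix p q assume pq: "p \<in> A" "q \<in> A" "p \<noteq> q" "p \<inter> q \<noteq> {}"
    have "(q,p) \<notin> (Lrel E - {(p,q),(q,p)})\<^sup>*" using F pq A unfolding FP_def by blast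
    thus "(q,p) \<notin> (Lrel A - {(p,q),(q,p)})\<^sup>*" using m by blast
  qed
qed

lemma Cls_sub:
  assumes C: "Cls E" and A: "A \<subseteq> E" and ni: "\<forall>a\<in>A. nbrs A a \<noteq> {}"
  shows "Cls A"
proof -
  have fE: "finite E" using C unfolding Cls_def by auto
  have d: "deg A v \<le> deg E v" for v
    unfolding deg_def using A fE by (intro card_mono) auto
  have d2: "deg E v \<le> 2" for v using C unfolding Cls_def by blast
  show ?thesis unfolding Cls_def
  proof (intro conjI)
    show "finite A" using finite_subset[OF A fE] .
    show "\<forall>e\<in>A. finite e \<and> 3 \<le> card e" using C A unfolding Cls_def by blast
    show "\<forall>e\<in>A. \<forall>f\<in>A. e \<noteq> f \<longrightarrow> card (e \<inter> f) \<le> 1" using C A unfolding Cls_def by blast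
    show "\<forall>v. deg A v \<le> 2" using d d2 le_trans by blast
    show "FP A" using FP_mono C A unfolding Cls_def by blast
    show "\<forall>e\<in>A. nbrs A e \<noteq> {}" by fact
  qed
qed

lemma nbrs_sym: "g \<in> E \<Longrightarrow> h \<in> nbrs E g \<Longrightarrow> g \<in> nbrs E h"
  unfolding nbrs_def by auto

lemma single_of: "finite S \<Longrightarrow> S \<noteq> {} \<Longrightarrow> card S \<le> 1 \<Longrightarrow> \<exists>x. S = {x}"
  by (metis card_le_Suc0_iff_eq One_nat_def ex_in_conv insertI1 subsetI subset_antisym singletonI insert_iff)

lemma glue_disj:
  assumes s1: "sol U1 E1 A1" and s2: "sol U2 E2 A2" and I: "U1 \<inter> U2 = {}"
  shows "\<exists>A. sol (U1 \<union> U2) (E1 \<union> E2) A \<and> (\<forall>v\<in>U1. clean A1 v \<longrightarrow> clean A v)"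
proof -
  obtain r1 r2 where s1: "solr U1 E1 A1 r1" and s2: "solr U2 E2 A2 r2" using s1 s2 unfolding sol_def by blast
  have A1U: "A1 \<subseteq> U1 \<times> U1" and A2U: "A2 \<subseteq> U2 \<times> U2" using s1 s2 unfolding solr_def by auto
  have "sol (U1 \<union> U2) (E1 \<union> E2) (A1 \<union> A2)" using glue_oriented[OF s1 s2, of undefined] I by blast
  moreover have "\<forall>v\<in>U1. clean A1 v \<longrightarrow> clean (A1 \<union> A2) v"
    using I A1U A2U by (auto simp: clean_def in_nbh_def out_nbh_def)
  ultimately show ?thesis by blast
qed

lemma split:
  assumes C: "Cls E" and p: "p \<in> E" and q: "q \<in> nbrs E p" and np: "nbrs E p \<noteq> {q}" and nq: "nbrs E q \<noteq> {p}"
  obtains A B z where "A \<union> B = E" "A \<inter> B = {}" "p \<in> A" "q \<in> B" "Cls A" "Cls B"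
    "\<Union>A \<inter> \<Union>B = {z}" "z \<in> p" "z \<in> q" "deg A z = 1" "deg B z = 1"
    "card A < card E" "card B < card E" "\<forall>v\<in>\<Union>A - {z}. deg A v = deg E v"
    "\<forall>a\<in>A. \<forall>b\<in>B. a \<inter> b \<noteq> {} \<longrightarrow> a = p \<and> b = q"
proof -
  have fE: "finite E" using C unfolding Cls_def by auto
  have qE: "q \<in> E" "q \<noteq> p" "q \<inter> p \<noteq> {}" using q unfolding nbrs_def by auto
  define R0 where "R0 = Lrel E - {(p,q),(q,p)}"
  define B where "B = {e. (q,e) \<in> R0\<^sup>*}"
  define A where "A = E - B"
  have BE: "B \<subseteq> E"
  proof
    fix e assume "e \<in> B"
    hence "(q,e) \<in> R0\<^sup>*" unfolding B_def by auto
    thus "e \<in> E" by (induct rule: rtrancl_induct) (use qE in \<open>auto simp: R0_def Lrel_def\<close>)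
  qed
  have qB: "q \<in> B" unfolding B_def by auto
  have pB: "p \<notin> B"
  proof
    assume "p \<in> B"
    hence "(q,p) \<in> (Lrel E - {(p,q),(q,p)})\<^sup>*" unfolding B_def R0_def by auto
    thus False using C p qE unfolding Cls_def FP_def by blast
  qed
  have clos: "\<And>e f. e \<in> B \<Longrightarrow> (e,f) \<in> R0 \<Longrightarrow> f \<in> B"
    unfolding B_def by (auto intro: rtrancl_into_rtrancl)
  have cross: "\<forall>a\<in>A. \<forall>b\<in>B. a \<inter> b \<noteq> {} \<longrightarrow> a = p \<and> b = q"
  proof (intro ballI impI)
    fix a b assume ab: "a \<in> A" "b \<in> B" "a \<inter> b \<noteq> {}"
    have "a \<noteq> b" "a \<in> E" "b \<in> E" using ab BE unfolding A_def by auto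
    hence L: "(b,a) \<in> Lrel E" using ab unfolding Lrel_def by auto
    have "a \<notin> B" using ab unfolding A_def by auto
    hence "(b,a) \<notin> R0" using clos ab by blast
    hence "(b,a) = (p,q) \<or> (b,a) = (q,p)" using L unfolding R0_def by blast
    thus "a = p \<and> b = q" using pB ab by auto
  qed
  obtain z where z: "z \<in> p" "z \<in> q" using qE by blast
  have zu: "\<And>v. v \<in> p \<Longrightarrow> v \<in> q \<Longrightarrow> v = z" using Cls_lin[OF C p qE(1)] qE(2) z by metis
  have pA: "p \<in> A" using p pB unfolding A_def by auto
  have UAB: "\<Union>A \<inter> \<Union>B = {z}"
  proof
    show "\<Union>A \<inter> \<Union>B \<subseteq> {z}"
    proof
      fix v assume "v \<in> \<Union>A \<inter> \<Union>B"
      then obtain a b where "a \<in> A" "b \<in> B" "v \<in> a" "v \<in> b" by blast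
      hence "a = p" "b = q" using cross by blast+
      thus "v \<in> {z}" using zu \<open>v \<in> a\<close> \<open>v \<in> b\<close> by auto
    qed
    show "{z} \<subseteq> \<Union>A \<inter> \<Union>B" using z pA qB by auto
  qed
  have zE: "\<And>e. e \<in> E \<Longrightarrow> z \<in> e \<Longrightarrow> e = p \<or> e = q"
    using Cls_three[OF C p qE(1)] qE(2) z by metis
  have dA: "deg A z = 1"
  proof -
    have "{e\<in>A. z \<in> e} = {p}" using zE pA z qB unfolding A_def by blast
    thus ?thesis unfolding deg_def by simp
  qed
  have dB: "deg B z = 1"
  proof -
    have "{e\<in>B. z \<in> e} = {q}" using zE pB z qB BE by blast
    thus ?thesis unfolding deg_def by simp
  qed
  have degA: "\<forall>v\<in>\<Union>A - {z}. deg A v = deg E v"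
  proof
    fix v assume v: "v \<in> \<Union>A - {z}"
    have "{e\<in>A. v \<in> e} = {e\<in>E. v \<in> e}"
    proof
      show "{e\<in>A. v \<in> e} \<subseteq> {e\<in>E. v \<in> e}" unfolding A_def by auto
      show "{e\<in>E. v \<in> e} \<subseteq> {e\<in>A. v \<in> e}"
      proof
        fix e assume e: "e \<in> {e\<in>E. v \<in> e}"
        have "e \<notin> B"
        proof
          assume "e \<in> B"
          hence "v \<in> \<Union>A \<inter> \<Union>B" using v e by auto
          thus False using UAB v by auto
        qed
        thus "e \<in> {e\<in>A. v \<in> e}" using e unfolding A_def by auto
      qed
    qed
    thus "deg A v = deg E v" unfolding deg_def by simp
  qed
  have AE: "A \<subseteq> E" unfolding A_def by auto
  have nA: "\<forall>a\<in>A. nbrs A a \<noteq> {}"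
  proof
    fix a assume a: "a \<in> A"
    have "\<exists>f\<in>nbrs E a. f \<noteq> q"
    proof (cases "a = p")
      case True thus ?thesis using np q by blast
    next
      case False
      obtain f where f: "f \<in> nbrs E a" using C a AE unfolding Cls_def by blast
      have "f \<noteq> q"
      proof
        assume "f = q"
        hence "a \<inter> q \<noteq> {}" using f unfolding nbrs_def by auto
        thus False using cross a qB False by blast
      qed
      thus ?thesis using f by blast
    qed
    then obtain f where f: "f \<in> nbrs E a" "f \<noteq> q" by blast
    have "f \<in> A"
    proof (rule ccontr)
      assume "f \<notin> A"
      hence "f \<in> B" using f unfolding A_def nbrs_def by auto
      moreover have "a \<inter> f \<noteq> {}" using f unfolding nbrs_def by auto
      ultimately show False using cross a f(2) by blast
    qed
    thus "nbrs A a \<noteq> {}" using f nbrs_sub[OF AE] by auto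
  qed
  have nB: "\<forall>b\<in>B. nbrs B b \<noteq> {}"
  proof
    fix b assume b: "b \<in> B"
    have "\<exists>f\<in>nbrs E b. f \<noteq> p"
    proof (cases "b = q")
      case True
      have "p \<in> nbrs E q" using nbrs_sym[OF p q] .
      thus ?thesis using nq True by blast
    next
      case False
      obtain f where f: "f \<in> nbrs E b" using C b BE unfolding Cls_def by blast
      have "f \<noteq> p"
      proof
        assume "f = p"
        hence "p \<inter> b \<noteq> {}" using f unfolding nbrs_def by auto
        thus False using cross pA b False by blast
      qed
      thus ?thesis using f by blast
    qed
    then obtain f where f: "f \<in> nbrs E b" "f \<noteq> p" by blast
    have "f \<in> B"
    proof (rule ccontr)
      assume "f \<notin> B"
      hence "f \<in> A" using f unfolding A_def nbrs_def by auto
      moreover have "f \<inter> b \<noteq> {}" using f unfolding nbrs_def by auto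
      ultimately show False using cross b f(2) by blast
    qed
    thus "nbrs B b \<noteq> {}" using f nbrs_sub[OF BE] by auto
  qed
  have CA: "Cls A" by (rule Cls_sub[OF C AE nA])
  have CB: "Cls B" by (rule Cls_sub[OF C BE nB])
  have cA: "card A < card E" using fE qE(1) qB AE unfolding A_def by (intro psubset_card_mono) auto
  have cB: "card B < card E" using fE p pB BE by (intro psubset_card_mono) auto
  have "A \<union> B = E" "A \<inter> B = {}" using BE unfolding A_def by auto
  show ?thesis
    by (rule that[OF \<open>A \<union> B = E\<close> \<open>A \<inter> B = {}\<close> pA qB CA CB UAB z dA dB cA cB degA cross])
qed

lemma comp_split:
  assumes C: "Cls E" and g: "g \<in> E" and e0: "e0 \<in> E" "(g,e0) \<notin> (Lrel E)\<^sup>*"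
  obtains A B where "A \<union> B = E" "A \<inter> B = {}" "g \<in> A" "B \<noteq> {}" "Cls A" "Cls B"
    "\<Union>A \<inter> \<Union>B = {}" "card A < card E" "card B < card E" "\<forall>v\<in>\<Union>A. deg A v = deg E v"
    "nbrs A g = nbrs E g"
proof -
  have fE: "finite E" using C unfolding Cls_def by auto
  define A where "A = {e\<in>E. (g,e) \<in> (Lrel E)\<^sup>*}"
  define B where "B = E - A"
  have AE: "A \<subseteq> E" and BE: "B \<subseteq> E" unfolding A_def B_def by auto
  have gA: "g \<in> A" using g unfolding A_def by auto
  have e0B: "e0 \<in> B" using e0 unfolding A_def B_def by auto
  have cross: "\<And>a b. a \<in> A \<Longrightarrow> b \<in> B \<Longrightarrow> a \<inter> b = {}"
  proof (rule ccontr)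
    fix a b assume ab: "a \<in> A" "b \<in> B" "a \<inter> b \<noteq> {}"
    have "a \<noteq> b" "b \<in> E" using ab unfolding B_def by auto
    hence "(a,b) \<in> Lrel E" using ab AE unfolding Lrel_def by auto
    hence "(g,b) \<in> (Lrel E)\<^sup>*" using ab unfolding A_def by (auto intro: rtrancl_into_rtrancl)
    thus False using ab \<open>b \<in> E\<close> unfolding A_def B_def by auto
  qed
  have nA: "\<And>a. a \<in> A \<Longrightarrow> nbrs A a = nbrs E a"
  proof -
    fix a assume a: "a \<in> A"
    have "nbrs E a \<subseteq> A"
    proof
      fix f assume f: "f \<in> nbrs E a"
      show "f \<in> A"
      proof (rule ccontr)
        assume "f \<notin> A"
        hence "f \<in> B" using f unfolding B_def nbrs_def by auto
        thus False using cross[OF a] f unfolding nbrs_def by auto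
      qed
    qed
    thus "nbrs A a = nbrs E a" using nbrs_sub[OF AE] by auto
  qed
  have nB: "\<And>b. b \<in> B \<Longrightarrow> nbrs B b = nbrs E b"
  proof -
    fix b assume b: "b \<in> B"
    have "nbrs E b \<subseteq> B"
    proof
      fix f assume f: "f \<in> nbrs E b"
      show "f \<in> B"
      proof (rule ccontr)
        assume "f \<notin> B"
        hence "f \<in> A" using f unfolding B_def nbrs_def by auto
        thus False using cross[OF _ b, of f] f unfolding nbrs_def by auto
      qed
    qed
    thus "nbrs B b = nbrs E b" using nbrs_sub[OF BE] by auto
  qed
  have CA: "Cls A"
  proof (rule Cls_sub[OF C AE], intro ballI)
    fix a assume "a \<in> A" thus "nbrs A a \<noteq> {}" using nA C AE unfolding Cls_def by auto
  qed
  have CB: "Cls B"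
  proof (rule Cls_sub[OF C BE], intro ballI)
    fix a assume "a \<in> B" thus "nbrs B a \<noteq> {}" using nB C BE unfolding Cls_def by auto
  qed
  have UAB: "\<Union>A \<inter> \<Union>B = {}" using cross by blast
  have cA: "card A < card E" using fE e0B AE e0(1) unfolding B_def by (intro psubset_card_mono) auto
  have cB: "card B < card E" using fE gA BE g unfolding B_def by (intro psubset_card_mono) auto
  have degA: "\<forall>v\<in>\<Union>A. deg A v = deg E v"
  proof
    fix v assume v: "v \<in> \<Union>A"
    have "{e\<in>A. v \<in> e} = {e\<in>E. v \<in> e}"
    proof
      show "{e\<in>A. v \<in> e} \<subseteq> {e\<in>E. v \<in> e}" using AE by auto
      show "{e\<in>E. v \<in> e} \<subseteq> {e\<in>A. v \<in> e}"
      proof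
        fix e assume e: "e \<in> {e\<in>E. v \<in> e}"
        have "e \<notin> B" using UAB v e by blast
        thus "e \<in> {e\<in>A. v \<in> e}" using e unfolding B_def by auto
      qed
    qed
    thus "deg A v = deg E v" unfolding deg_def by simp
  qed
  have "A \<union> B = E" "A \<inter> B = {}" "B \<noteq> {}" using AE e0B unfolding B_def by auto
  thus ?thesis using that CA CB UAB cA cB degA nA[OF gA] gA by blast
qed

lemma star_app:
  assumes C: "Cls E" and c: "c \<in> E" and Ec: "E = insert c (nbrs E c)"
    and lf: "\<forall>l\<in>nbrs E c. nbrs E l = {c}" and f0: "f0 \<in> nbrs E c"
  shows "\<exists>A. sol (\<Union>E) E A \<and> (\<forall>v. deg E v = 1 \<longrightarrow> v \<in> c \<union> f0 \<longrightarrow> clean A v)"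
proof -
  define L where "L = nbrs E c"
  have fE: "finite E" using C unfolding Cls_def by auto
  have LE: "L \<subseteq> E" unfolding L_def nbrs_def by auto
  have fL: "finite L" using finite_subset[OF LE fE] .
  have cL: "c \<notin> L" unfolding L_def nbrs_def by auto
  have fc: "finite c" "2 \<le> card c" using C c unfolding Cls_def by auto
  have lv: "\<forall>l\<in>L. finite l \<and> 3 \<le> card l \<and> (\<exists>x. c \<inter> l = {x})"
  proof
    fix l assume l: "l \<in> L"
    have "finite l" "3 \<le> card l" using C l LE unfolding Cls_def by auto
    moreover have "c \<inter> l \<noteq> {}" using l unfolding L_def nbrs_def by auto
    moreover have "card (c \<inter> l) \<le> 1"
    proof -
      have "l \<in> E" "c \<noteq> l" using l LE cL by auto
      thus ?thesis using C c unfolding Cls_def by blast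
    qed
    moreover have "finite (c \<inter> l)" using fc by auto
    ultimately show "finite l \<and> 3 \<le> card l \<and> (\<exists>x. c \<inter> l = {x})" using single_of by blast
  qed
  have disj: "\<forall>l\<in>L. \<forall>l'\<in>L. l \<noteq> l' \<longrightarrow> l \<inter> l' = {}"
  proof (intro ballI impI)
    fix l l' assume l: "l \<in> L" "l' \<in> L" "l \<noteq> l'"
    show "l \<inter> l' = {}"
    proof (rule ccontr)
      assume "l \<inter> l' \<noteq> {}"
      hence "l' \<in> nbrs E l" using l LE unfolding nbrs_def by auto
      hence "l' = c" using lf l unfolding L_def by auto
      thus False using cL l by auto
    qed
  qed
  obtain A where A: "sol (c \<union> \<Union>L) (insert c L) A" "\<forall>v\<in>(c - \<Union>L) \<union> (f0 - c). clean A v"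
    using star[OF fL f0[folded L_def] cL fc lv disj] by blast
  have U: "\<Union>E = c \<union> \<Union>L" "E = insert c L" using Ec unfolding L_def by auto
  have cl: "\<forall>v. deg E v = 1 \<longrightarrow> v \<in> c \<union> f0 \<longrightarrow> clean A v"
  proof (intro allI impI)
    fix v assume d: "deg E v = 1" and v: "v \<in> c \<union> f0"
    have f0E: "f0 \<in> E" "f0 \<noteq> c" using f0 unfolding nbrs_def by auto
    show "clean A v"
    proof (cases "v \<in> c")
      case True
      have "v \<notin> \<Union>L"
      proof
        assume "v \<in> \<Union>L"
        then obtain l where "l \<in> L" "v \<in> l" by blast
        thus False using deg2_of[OF C c, of l v] True d cL LE by auto
      qed
      thus ?thesis using A(2) True by auto
    next
      case False
      hence "v \<in> f0 - c" using v by auto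
      thus ?thesis using A(2) by auto
    qed
  qed
  show ?thesis using A(1) cl unfolding U by auto
qed

lemma main: "Cls E \<Longrightarrow> g \<in> E \<Longrightarrow> \<exists>A. sol (\<Union>E) E A \<and> (\<forall>v\<in>Wset E g. clean A v)"
proof (induction "card E" arbitrary: E g rule: less_induct)
  case less
  note C = less.prems(1) and g = less.prems(2)
  have fE: "finite E" using C unfolding Cls_def by auto
  show ?case
  proof (cases "\<exists>e0\<in>E. (g,e0) \<notin> (Lrel E)\<^sup>*")
    case True
    then obtain e0 where e0: "e0 \<in> E" "(g,e0) \<notin> (Lrel E)\<^sup>*" by blast
    obtain A B where AB: "A \<union> B = E" "A \<inter> B = {}" "g \<in> A" "B \<noteq> {}" "Cls A" "Cls B"
      "\<Union>A \<inter> \<Union>B = {}" "card A < card E" "card B < card E" "\<forall>v\<in>\<Union>A. deg A v = deg E v"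
      "nbrs A g = nbrs E g"
      using comp_split[OF C g e0] by blast
    obtain A1 where A1: "sol (\<Union>A) A A1" "\<forall>v\<in>Wset A g. clean A1 v" using less.hyps[OF AB(8) AB(5,3)] by blast
    obtain b where b: "b \<in> B" using AB(4) by blast
    obtain A2 where A2: "sol (\<Union>B) B A2" using less.hyps[OF AB(9) AB(6) b] by blast
    obtain A' where A': "sol (\<Union>A \<union> \<Union>B) (A \<union> B) A'" "\<forall>v\<in>\<Union>A. clean A1 v \<longrightarrow> clean A' v"
      using glue_disj[OF A1(1) A2 AB(7)] by blast
    have "\<forall>v\<in>Wset E g. clean A' v"
    proof
      fix v assume v: "v \<in> Wset E g"
      have vA: "v \<in> \<Union>A"
      proof -
        have "v \<in> g \<or> (\<exists>h. nbrs E g = {h} \<and> v \<in> h)" using v unfolding Wset_def by auto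
        moreover have "nbrs E g \<subseteq> A" using AB(11) unfolding nbrs_def by auto
        ultimately show ?thesis using AB(3) by auto
      qed
      have "v \<in> Wset A g" using v vA AB(10,11) unfolding Wset_def by auto
      thus "clean A' v" using A1(2) A'(2) vA by blast
    qed
    moreover have "sol (\<Union>E) E A'" using A'(1) AB(1) by (metis Union_Un_distrib)
    ultimately show ?thesis by (intro exI[of _ A'] conjI)
  next
    case False
    hence conn: "\<And>e. e \<in> E \<Longrightarrow> (g,e) \<in> (Lrel E)\<^sup>*" by blast
    consider (a) "\<exists>h\<in>nbrs E g. nbrs E h \<noteq> {g} \<and> nbrs E g \<noteq> {h}"
      | (b) "\<exists>h. nbrs E g = {h} \<and> (\<exists>h'\<in>nbrs E h. h' \<noteq> g \<and> nbrs E h' \<noteq> {h})"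
      | (c) "\<not> (\<exists>h\<in>nbrs E g. nbrs E h \<noteq> {g} \<and> nbrs E g \<noteq> {h})"
            "\<not> (\<exists>h. nbrs E g = {h} \<and> (\<exists>h'\<in>nbrs E h. h' \<noteq> g \<and> nbrs E h' \<noteq> {h}))"
      by blast
    then show ?thesis
    proof cases
      case a
      then obtain h where h: "h \<in> nbrs E g" "nbrs E h \<noteq> {g}" "nbrs E g \<noteq> {h}" by blast
      obtain A B z where S: "A \<union> B = E" "A \<inter> B = {}" "g \<in> A" "h \<in> B" "Cls A" "Cls B"
        "\<Union>A \<inter> \<Union>B = {z}" "z \<in> g" "z \<in> h" "deg A z = 1" "deg B z = 1"
        "card A < card E" "card B < card E" "\<forall>v\<in>\<Union>A - {z}. deg A v = deg E v"
        "\<forall>a\<in>A. \<forall>b\<in>B. a \<inter> b \<noteq> {} \<longrightarrow> a = g \<and> b = h"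
        using split[OF C g h(1) h(3) h(2)] by blast
      obtain A1 where A1: "sol (\<Union>A) A A1" "\<forall>v\<in>Wset A g. clean A1 v" using less.hyps[OF S(12) S(5,3)] by blast
      obtain A2 where A2: "sol (\<Union>B) B A2" "\<forall>v\<in>Wset B h. clean A2 v" using less.hyps[OF S(13) S(6,4)] by blast
      have zA: "z \<in> Wset A g" using S(8,10) unfolding Wset_def by auto
      have zB: "z \<in> Wset B h" using S(9,11) unfolding Wset_def by auto
      obtain A' where A': "sol (\<Union>A \<union> \<Union>B) (A \<union> B) A'" "\<forall>v\<in>\<Union>A - {z}. clean A1 v \<longrightarrow> clean A' v"
        using glue[OF A1(1) A2(1), of z] S(7) A1(2) A2(2) zA zB by blast
      have hE: "h \<in> E" "h \<noteq> g" using h unfolding nbrs_def by auto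
      have "\<forall>v\<in>Wset E g. clean A' v"
      proof
        fix v assume v: "v \<in> Wset E g"
        have ns: "\<not> (\<exists>h'. nbrs E g = {h'})" using h(1,3) by auto
        hence vg: "v \<in> g" "deg E v = 1" using v unfolding Wset_def by auto
        have "v \<noteq> z" using deg2_of[OF C g hE(1), of z] hE S(8,9) vg by auto
        hence vA: "v \<in> \<Union>A - {z}" using vg S(3) by auto
        hence "v \<in> Wset A g" using vg S(14) unfolding Wset_def by auto
        thus "clean A' v" using A1(2) A'(2) vA by blast
      qed
      moreover have "sol (\<Union>E) E A'" using A'(1) S(1) by (metis Union_Un_distrib)
      ultimately show ?thesis by (intro exI[of _ A'] conjI)
    next
      case b
      from b obtain h where h1: "nbrs E g = {h}" and h2: "\<exists>h'\<in>nbrs E h. h' \<noteq> g \<and> nbrs E h' \<noteq> {h}"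
        by (elim exE conjE)
      from h2 obtain h' where h3: "h' \<in> nbrs E h" "h' \<noteq> g" "nbrs E h' \<noteq> {h}" by (elim bexE conjE)
      note h = h1 h3
      have hE: "h \<in> E" "h \<noteq> g" using h(1) unfolding nbrs_def by auto
      have gh: "g \<in> nbrs E h" using nbrs_sym[OF g] h(1) by auto
      have np: "nbrs E h \<noteq> {h'}" using gh h(3) by auto
      obtain A B z where S: "A \<union> B = E" "A \<inter> B = {}" "h \<in> A" "h' \<in> B" "Cls A" "Cls B"
        "\<Union>A \<inter> \<Union>B = {z}" "z \<in> h" "z \<in> h'" "deg A z = 1" "deg B z = 1"
        "card A < card E" "card B < card E" "\<forall>v\<in>\<Union>A - {z}. deg A v = deg E v"
        "\<forall>a\<in>A. \<forall>b\<in>B. a \<inter> b \<noteq> {} \<longrightarrow> a = h \<and> b = h'"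
        using split[OF C hE(1) h(2) np h(4)] by blast
      have gA: "g \<in> A"
      proof (rule ccontr)
        assume "g \<notin> A"
        hence "g \<in> B" using S(1) g by auto
        moreover have "h \<inter> g \<noteq> {}" using h(1) unfolding nbrs_def by auto
        ultimately show False using S(15) S(3) h(3) by blast
      qed
      have nA: "nbrs A g = {h}" using nbrs_sub[of A E g] S(1,3) h(1) by auto
      obtain A1 where A1: "sol (\<Union>A) A A1" "\<forall>v\<in>Wset A g. clean A1 v" using less.hyps[OF S(12) S(5) gA] by blast
      obtain A2 where A2: "sol (\<Union>B) B A2" "\<forall>v\<in>Wset B h'. clean A2 v" using less.hyps[OF S(13) S(6,4)] by blast
      have zA: "z \<in> Wset A g" using S(8,10) nA unfolding Wset_def by auto
      have zB: "z \<in> Wset B h'" using S(9,11) unfolding Wset_def by auto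
      obtain A' where A': "sol (\<Union>A \<union> \<Union>B) (A \<union> B) A'" "\<forall>v\<in>\<Union>A - {z}. clean A1 v \<longrightarrow> clean A' v"
        using glue[OF A1(1) A2(1), of z] S(7) A1(2) A2(2) zA zB by blast
      have h'E: "h' \<in> E" "h' \<noteq> h" using h(2) unfolding nbrs_def by auto
      have "\<forall>v\<in>Wset E g. clean A' v"
      proof
        fix v assume v: "v \<in> Wset E g"
        hence vg: "v \<in> g \<or> v \<in> h" "deg E v = 1" using h(1) unfolding Wset_def by auto
        have "v \<noteq> z" using deg2_of[OF C hE(1) h'E(1), of z] h'E S(8,9) vg by auto
        hence vA: "v \<in> \<Union>A - {z}" using vg gA S(3) by auto
        hence "v \<in> Wset A g" using vg S(14) nA unfolding Wset_def by auto
        thus "clean A' v" using A1(2) A'(2) vA by blast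
      qed
      moreover have "sol (\<Union>E) E A'" using A'(1) S(1) by (metis Union_Un_distrib)
      ultimately show ?thesis by (intro exI[of _ A'] conjI)
    next
      case c
      show ?thesis
      proof (cases "\<forall>h\<in>nbrs E g. nbrs E h = {g}")
        case True
        obtain f0 where f0: "f0 \<in> nbrs E g" "\<forall>h. nbrs E g = {h} \<longrightarrow> h = f0"
        proof (cases "\<exists>h. nbrs E g = {h}")
          case True then obtain h where "nbrs E g = {h}" by blast
          thus ?thesis using that by auto
        next
          case False
          obtain f where "f \<in> nbrs E g" using C g unfolding Cls_def by blast
          thus ?thesis using that False by blast
        qed
        have Ec: "E = insert g (nbrs E g)"
        proof
          show "insert g (nbrs E g) \<subseteq> E" using g unfolding nbrs_def by auto
          show "E \<subseteq> insert g (nbrs E g)"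
          proof
            fix e assume e: "e \<in> E"
            have "(g,e) \<in> (Lrel E)\<^sup>*" using conn[OF e] .
            thus "e \<in> insert g (nbrs E g)"
            proof (induct rule: rtrancl_induct)
              case base thus ?case by auto
            next
              case (step y z)
              from step.hyps(2) have yz: "y \<in> E" "z \<in> E" "y \<noteq> z" "y \<inter> z \<noteq> {}" unfolding Lrel_def by auto
              show ?case
              proof (cases "y = g")
                case True thus ?thesis using yz unfolding nbrs_def by auto
              next
                case False
                hence "y \<in> nbrs E g" using step.hyps(3) by auto
                hence "nbrs E y = {g}" using True by auto
                moreover have "z \<in> nbrs E y" using yz unfolding nbrs_def by auto
                ultimately show ?thesis by auto
              qed
            qed
          qed
        qed
        obtain A where A: "sol (\<Union>E) E A" "\<forall>v. deg E v = 1 \<longrightarrow> v \<in> g \<union> f0 \<longrightarrow> clean A v"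
          using star_app[OF C g Ec True f0(1)] by blast
        have "\<forall>v\<in>Wset E g. clean A v" using A(2) f0(2) unfolding Wset_def by auto
        thus ?thesis using A(1) by blast
      next
        case False
        then obtain h where h: "h \<in> nbrs E g" "nbrs E h \<noteq> {g}" by blast
        have ng: "nbrs E g = {h}" using c(1) h by blast
        have lf: "\<forall>l\<in>nbrs E h. nbrs E l = {h}" using c(2) ng by auto
        have hE: "h \<in> E" using h unfolding nbrs_def by auto
        have gh: "g \<in> nbrs E h" using nbrs_sym[OF g h(1)] .
        have Ec: "E = insert h (nbrs E h)"
        proof
          show "insert h (nbrs E h) \<subseteq> E" using hE unfolding nbrs_def by auto
          show "E \<subseteq> insert h (nbrs E h)"
          proof
            fix e assume e: "e \<in> E"
            have "(g,e) \<in> (Lrel E)\<^sup>*" using conn[OF e] .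
            thus "e \<in> insert h (nbrs E h)"
            proof (induct rule: rtrancl_induct)
              case base thus ?case using gh by auto
            next
              case (step y z)
              from step.hyps(2) have yz: "y \<in> E" "z \<in> E" "y \<noteq> z" "y \<inter> z \<noteq> {}" unfolding Lrel_def by auto
              show ?case
              proof (cases "y = h")
                case True thus ?thesis using yz unfolding nbrs_def by auto
              next
                case False
                hence "y \<in> nbrs E h" using step.hyps(3) by auto
                hence "nbrs E y = {h}" using lf by auto
                moreover have "z \<in> nbrs E y" using yz unfolding nbrs_def by auto
                ultimately show ?thesis by auto
              qed
            qed
          qed
        qed
        obtain A where A: "sol (\<Union>E) E A" "\<forall>v. deg E v = 1 \<longrightarrow> v \<in> h \<union> g \<longrightarrow> clean A v"
          using star_app[OF C hE Ec lf gh] by blast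
        have "\<forall>v\<in>Wset E g. clean A v" using A(2) ng unfolding Wset_def by auto
        thus ?thesis using A(1) by blast
      qed
    qed
  qed
qed

lemma add_iso:
  assumes s: "sol U F A" and U: "U \<noteq> {}" and d: "s \<inter> U = {}" and fs: "finite s" and cs: "2 \<le> card s"
  shows "\<exists>A'. sol (U \<union> s) (insert s F) A'"
proof -
  obtain r where sr: "solr U F A r" using s unfolding sol_def by blast
  have fU: "finite U" and AU: "A \<subseteq> U \<times> U" and rA: "\<And>a b. (a,b)\<in>A \<Longrightarrow> r a < r b"
    and e1: "\<And>e. e\<in>F \<Longrightarrow> e \<subseteq> U \<and> 2 \<le> card e \<and> (\<exists>v\<in>U. e = in_nbh A v \<or> e = out_nbh A v)"
    and c1: "\<And>v. v\<in>U \<Longrightarrow> (2 \<le> card (in_nbh A v) \<longrightarrow> in_nbh A v \<in> F) \<and> (2 \<le> card (out_nbh A v) \<longrightarrow> out_nbh A v \<in> F)"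
    using sr unfolding solr_def by auto
  have "Max (r ` U) \<in> r ` U" using fU U by (intro Max_in) auto
  then obtain v where v0: "v \<in> U" "r v = Max (r ` U)" by auto
  have "\<forall>w\<in>U. r w \<le> r v" using v0 fU by auto
  note v = v0(1) this
  have ov: "out_nbh A v = {}"
  proof (rule ccontr)
    assume "out_nbh A v \<noteq> {}"
    then obtain w where "(v,w) \<in> A" unfolding out_nbh_def by auto
    hence "r v < r w" "w \<in> U" using rA AU by auto
    thus False using v by fastforce
  qed
  have vs: "v \<notin> s" using v d by auto
  define A' where "A' = A \<union> ({v} \<times> s)"
  define r' where "r' = (\<lambda>x. if x \<in> s then r v + 1 else r x)"
  have inA': "\<And>x. in_nbh A' x = in_nbh A x \<union> (if x \<in> s then {v} else {})"
    unfolding A'_def by (auto simp: in_nbh_def)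
  have outA': "\<And>x. out_nbh A' x = out_nbh A x \<union> (if x = v then s else {})"
    unfolding A'_def by (auto simp: out_nbh_def)
  have outs: "\<And>x. x \<notin> U \<Longrightarrow> in_nbh A x = {}" "\<And>x. x \<notin> U \<Longrightarrow> out_nbh A x = {}"
    using AU by (auto simp: in_nbh_def out_nbh_def)
  have "solr (U \<union> s) (insert s F) A' r'"
    unfolding solr_def
  proof (intro conjI)
    show "finite (U \<union> s)" using fU fs by auto
    show "A' \<subseteq> (U \<union> s) \<times> (U \<union> s)" unfolding A'_def using AU v by auto
    show "\<forall>(a,b)\<in>A'. r' a < r' b"
    proof clarify
      fix a b assume ab: "(a,b) \<in> A'"
      show "r' a < r' b"
      proof (cases "(a,b) \<in> A")
        case True
        hence "a \<notin> s" "b \<notin> s" using AU d by auto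
        thus ?thesis using rA[OF True] unfolding r'_def by auto
      next
        case False
        hence "a = v" "b \<in> s" using ab unfolding A'_def by auto
        thus ?thesis using vs unfolding r'_def by auto
      qed
    qed
    show "\<forall>e\<in>insert s F. e \<subseteq> U \<union> s \<and> 2 \<le> card e \<and> (\<exists>w\<in>U \<union> s. e = in_nbh A' w \<or> e = out_nbh A' w)"
    proof
      fix e assume "e \<in> insert s F"
      then show "e \<subseteq> U \<union> s \<and> 2 \<le> card e \<and> (\<exists>w\<in>U \<union> s. e = in_nbh A' w \<or> e = out_nbh A' w)"
      proof
        assume "e = s"
        moreover have "out_nbh A' v = s" using outA'[of v] ov by auto
        ultimately show ?thesis using cs v by auto
      next
        assume eF: "e \<in> F"
        obtain w where w: "w \<in> U" "e = in_nbh A w \<or> e = out_nbh A w" and ce: "2 \<le> card e" and eU: "e \<subseteq> U"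
          using e1[OF eF] by auto
        have "w \<notin> s" using w d by auto
        have "e \<noteq> {}" using ce by auto
        have "e = in_nbh A' w \<or> e = out_nbh A' w"
        proof (cases "w = v")
          case True
          hence "e = in_nbh A w" using w ov \<open>e \<noteq> {}\<close> by auto
          thus ?thesis using inA'[of w] \<open>w \<notin> s\<close> by auto
        next
          case False
          thus ?thesis using w inA'[of w] outA'[of w] \<open>w \<notin> s\<close> by auto
        qed
        thus ?thesis using w ce eU by auto
      qed
    qed
    show "\<forall>x\<in>U \<union> s. (2 \<le> card (in_nbh A' x) \<longrightarrow> in_nbh A' x \<in> insert s F) \<and>
        (2 \<le> card (out_nbh A' x) \<longrightarrow> out_nbh A' x \<in> insert s F)"
    proof
      fix x assume x: "x \<in> U \<union> s"
      have i: "2 \<le> card (in_nbh A' x) \<longrightarrow> in_nbh A' x \<in> insert s F"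
      proof (cases "x \<in> s")
        case True
        hence "in_nbh A' x = {v}" using inA'[of x] outs(1)[of x] d by auto
        thus ?thesis by auto
      next
        case False
        hence "in_nbh A' x = in_nbh A x" using inA' by auto
        thus ?thesis using c1[of x] outs(1)[of x] by (cases "x \<in> U") auto
      qed
      have o: "2 \<le> card (out_nbh A' x) \<longrightarrow> out_nbh A' x \<in> insert s F"
      proof (cases "x = v")
        case True
        hence "out_nbh A' x = s" using outA'[of x] ov by auto
        thus ?thesis by auto
      next
        case False
        hence "out_nbh A' x = out_nbh A x" using outA' by auto
        thus ?thesis using c1[of x] outs(2)[of x] by (cases "x \<in> U") auto
      qed
      show "(2 \<le> card (in_nbh A' x) \<longrightarrow> in_nbh A' x \<in> insert s F) \<and>
        (2 \<le> card (out_nbh A' x) \<longrightarrow> out_nbh A' x \<in> insert s F)" using i o by blast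
    qed
  qed
  thus ?thesis unfolding sol_def by blast
qed

lemma trancl_rank: "(x,y) \<in> A\<^sup>+ \<Longrightarrow> \<forall>(a,b)\<in>A. r a < (r b :: real) \<Longrightarrow> r x < r y"
  by (induct rule: trancl_induct) fastforce+

lemma sol_final:
  assumes s: "sol U E A" and UV: "U \<subseteq> V"
  shows "acyclic_digraph V A \<and> niche_edges V A = E"
proof -
  obtain r where sr: "solr U E A r" using s unfolding sol_def by blast
  have fU: "finite U" and AU: "A \<subseteq> U \<times> U" and rA: "\<forall>(a,b)\<in>A. r a < r b"
    and e1: "\<And>e. e\<in>E \<Longrightarrow> e \<subseteq> U \<and> 2 \<le> card e \<and> (\<exists>v\<in>U. e = in_nbh A v \<or> e = out_nbh A v)"
    and c1: "\<And>v. v\<in>U \<Longrightarrow> (2 \<le> card (in_nbh A v) \<longrightarrow> in_nbh A v \<in> E) \<and> (2 \<le> card (out_nbh A v) \<longrightarrow> out_nbh A v \<in> E)"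
    using sr unfolding solr_def by auto
  have dig: "digraph V A" unfolding digraph_def
  proof (intro conjI allI impI)
    show "A \<subseteq> V \<times> V" using AU UV by auto
    fix u v assume "(u,v) \<in> A"
    hence "r u < r v" using rA by auto
    thus "(v,u) \<notin> A" using rA by auto
  qed
  have acy: "acyclic A" unfolding acyclic_def
  proof
    fix x show "(x,x) \<notin> A\<^sup>+" using trancl_rank[of x x A r] rA by auto
  qed
  have outs: "\<And>x. x \<notin> U \<Longrightarrow> in_nbh A x = {}" "\<And>x. x \<notin> U \<Longrightarrow> out_nbh A x = {}"
    using AU by (auto simp: in_nbh_def out_nbh_def)
  have "niche_edges V A = E"
  proof
    show "niche_edges V A \<subseteq> E"
    proof
      fix e assume "e \<in> niche_edges V A"
      then obtain v where v: "v \<in> V" "e = in_nbh A v \<or> e = out_nbh A v" and ce: "2 \<le> card e"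
        unfolding niche_edges_def by auto
      have "v \<in> U" using outs[of v] v ce by (cases "v \<in> U") auto
      thus "e \<in> E" using c1[of v] v ce by auto
    qed
    show "E \<subseteq> niche_edges V A"
    proof
      fix e assume "e \<in> E"
      thus "e \<in> niche_edges V A" using e1[of e] UV unfolding niche_edges_def by blast
    qed
  qed
  thus ?thesis using dig acy unfolding acyclic_digraph_def by auto
qed

definition crel :: "'a set set \<Rightarrow> ('a \<times> 'a) set" where
  "crel G = {(x,y). {x,y} \<in> G}"

lemma sym_crel: "(x,y) \<in> crel G \<Longrightarrow> (y,x) \<in> crel G"
  unfolding crel_def by (simp add: insert_commute)

lemma crel_rtrancl_sym: "(x,y) \<in> (crel G)\<^sup>* \<Longrightarrow> (y,x) \<in> (crel G)\<^sup>*"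
proof (induct rule: rtrancl_induct)
  case base thus ?case by simp
next
  case (step y z)
  have "(z,y) \<in> crel G" using sym_crel[OF step.hyps(2)] .
  thus ?case using step.hyps(3) by (rule converse_rtrancl_into_rtrancl)
qed

lemma path_split:
  assumes sym: "\<And>x y. (x,y) \<in> R \<Longrightarrow> (y,x) \<in> R"
  shows "(x,y) \<in> (R \<union> {(a,b),(b,a)})\<^sup>* \<Longrightarrow> (x,y) \<in> R\<^sup>* \<or>
     (((x,a) \<in> R\<^sup>* \<or> (x,b) \<in> R\<^sup>*) \<and> ((y,a) \<in> R\<^sup>* \<or> (y,b) \<in> R\<^sup>*))"
proof (induct rule: rtrancl_induct)
  case base thus ?case by simp
next
  case (step y z)
  show ?case
  proof (cases "(y,z) \<in> R")
    case True
    have zy: "(z,y) \<in> R" using sym[OF True] .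
    from step.hyps(3) show ?thesis
    proof
      assume "(x,y) \<in> R\<^sup>*"
      thus ?thesis using True by (auto intro: rtrancl_into_rtrancl)
    next
      assume h: "((x,a) \<in> R\<^sup>* \<or> (x,b) \<in> R\<^sup>*) \<and> ((y,a) \<in> R\<^sup>* \<or> (y,b) \<in> R\<^sup>*)"
      have "(z,a) \<in> R\<^sup>* \<or> (z,b) \<in> R\<^sup>*" using h zy by (auto intro: converse_rtrancl_into_rtrancl)
      thus ?thesis using h by auto
    qed
  next
    case False
    hence yz: "(y = a \<and> z = b) \<or> (y = b \<and> z = a)" using step.hyps(2) by auto
    have "(x,a) \<in> R\<^sup>* \<or> (x,b) \<in> R\<^sup>*" using step.hyps(3) yz by auto
    moreover have "(z,a) \<in> R\<^sup>* \<or> (z,b) \<in> R\<^sup>*" using yz by auto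
    ultimately show ?thesis by auto
  qed
qed

lemma crel_insert: "crel (insert {a,b} G) = crel G \<union> {(a,b),(b,a)}"
  unfolding crel_def by (auto simp: doubleton_eq_iff)

lemma crel_insert_other: "\<not> (\<exists>a b. ed = {a,b}) \<Longrightarrow> crel (insert ed G) = crel G"
  unfolding crel_def by auto

lemma count_conn:
  assumes fG: "finite G"
  shows "finite V \<Longrightarrow> finite S \<Longrightarrow> (\<forall>x\<in>V. \<exists>s\<in>S. (x,s) \<in> (crel G)\<^sup>*) \<Longrightarrow> card V \<le> card G + card S"
  using fG
proof (induction G arbitrary: S rule: finite_induct)
  case empty
  have "V \<subseteq> S" using empty.prems(3) unfolding crel_def by auto
  thus ?case using card_mono[OF empty.prems(2)] by auto
next
  case (insert ed G)
  show ?case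
  proof (cases "\<exists>a b. ed = {a,b}")
    case False
    hence "crel (insert ed G) = crel G" by (rule crel_insert_other)
    hence "card V \<le> card G + card S" using insert.IH[OF insert.prems(1,2)] insert.prems(3) by auto
    thus ?thesis using insert.hyps by auto
  next
    case True
    then obtain a b where ed: "ed = {a,b}" by blast
    define R where "R = crel G"
    have cr: "crel (insert ed G) = R \<union> {(a,b),(b,a)}" unfolding ed R_def by (rule crel_insert)
    have symR: "\<And>x y. (x,y) \<in> R \<Longrightarrow> (y,x) \<in> R" unfolding R_def by (rule sym_crel)
    have symRs: "\<And>x y. (x,y) \<in> R\<^sup>* \<Longrightarrow> (y,x) \<in> R\<^sup>*" unfolding R_def by (rule crel_rtrancl_sym)
    have sp: "\<And>x s. (x,s) \<in> (crel (insert ed G))\<^sup>* \<Longrightarrow> (x,s) \<in> R\<^sup>* \<or>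
        (((x,a) \<in> R\<^sup>* \<or> (x,b) \<in> R\<^sup>*) \<and> ((s,a) \<in> R\<^sup>* \<or> (s,b) \<in> R\<^sup>*))"
      unfolding cr using path_split[OF symR] by blast
    have ex: "\<exists>S'. finite S' \<and> card S' \<le> card S + 1 \<and> (\<forall>x\<in>V. \<exists>s\<in>S'. (x,s) \<in> R\<^sup>*)"
    proof (cases "\<exists>s\<in>S. (a,s) \<in> R\<^sup>*")
      case True
      then obtain sa where sa: "sa \<in> S" "(a,sa) \<in> R\<^sup>*" by blast
      have "\<forall>x\<in>V. \<exists>s\<in>insert b S. (x,s) \<in> R\<^sup>*"
      proof
        fix x assume "x \<in> V"
        then obtain s where s: "s \<in> S" "(x,s) \<in> (crel (insert ed G))\<^sup>*" using insert.prems(3) by blast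
        from sp[OF s(2)] show "\<exists>s\<in>insert b S. (x,s) \<in> R\<^sup>*"
        proof
          assume "(x,s) \<in> R\<^sup>*" thus ?thesis using s by blast
        next
          assume h: "((x,a) \<in> R\<^sup>* \<or> (x,b) \<in> R\<^sup>*) \<and> ((s,a) \<in> R\<^sup>* \<or> (s,b) \<in> R\<^sup>*)"
          thus ?thesis using sa by (meson insertI1 insertI2 rtrancl_trans)
        qed
      qed
      moreover have "card (insert b S) \<le> card S + 1" using insert.prems(2) by (simp add: card_insert_if)
      ultimately show ?thesis using insert.prems(2) by (intro exI[of _ "insert b S"]) auto
    next
      case F1: False
      show ?thesis
      proof (cases "\<exists>s\<in>S. (b,s) \<in> R\<^sup>*")
        case True
        then obtain sb where sb: "sb \<in> S" "(b,sb) \<in> R\<^sup>*" by blast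
        have "\<forall>x\<in>V. \<exists>s\<in>insert a S. (x,s) \<in> R\<^sup>*"
        proof
          fix x assume "x \<in> V"
          then obtain s where s: "s \<in> S" "(x,s) \<in> (crel (insert ed G))\<^sup>*" using insert.prems(3) by blast
          from sp[OF s(2)] show "\<exists>s\<in>insert a S. (x,s) \<in> R\<^sup>*"
          proof
            assume "(x,s) \<in> R\<^sup>*" thus ?thesis using s by blast
          next
            assume h: "((x,a) \<in> R\<^sup>* \<or> (x,b) \<in> R\<^sup>*) \<and> ((s,a) \<in> R\<^sup>* \<or> (s,b) \<in> R\<^sup>*)"
            thus ?thesis using sb by (meson insertI1 insertI2 rtrancl_trans)
          qed
        qed
        moreover have "card (insert a S) \<le> card S + 1" using insert.prems(2) by (simp add: card_insert_if)
        ultimately show ?thesis using insert.prems(2) by (intro exI[of _ "insert a S"]) auto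
      next
        case F2: False
        have "\<forall>x\<in>V. \<exists>s\<in>S. (x,s) \<in> R\<^sup>*"
        proof
          fix x assume "x \<in> V"
          then obtain s where s: "s \<in> S" "(x,s) \<in> (crel (insert ed G))\<^sup>*" using insert.prems(3) by blast
          from sp[OF s(2)] show "\<exists>s\<in>S. (x,s) \<in> R\<^sup>*"
          proof
            assume "(x,s) \<in> R\<^sup>*" thus ?thesis using s by blast
          next
            assume h: "((x,a) \<in> R\<^sup>* \<or> (x,b) \<in> R\<^sup>*) \<and> ((s,a) \<in> R\<^sup>* \<or> (s,b) \<in> R\<^sup>*)"
            hence "(a,s) \<in> R\<^sup>* \<or> (b,s) \<in> R\<^sup>*" using symRs by blast
            thus ?thesis using F1 F2 s by blast
          qed
        qed
        thus ?thesis using insert.prems(2) by (intro exI[of _ S]) auto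
      qed
    qed
    then obtain S' where S': "finite S'" "card S' \<le> card S + 1" "\<forall>x\<in>V. \<exists>s\<in>S'. (x,s) \<in> (crel G)\<^sup>*"
      unfolding R_def by blast
    have "card V \<le> card G + card S'" using insert.IH[OF insert.prems(1) S'(1) S'(3)] .
    thus ?thesis using S'(2) insert.hyps by auto
  qed
qed

lemma FP_of_tree:
  assumes T: "is_tree V T" and EV: "\<forall>e\<in>E. e \<subseteq> V"
    and lin: "\<forall>e\<in>E. \<forall>f\<in>E. e \<noteq> f \<longrightarrow> card (e \<inter> f) \<le> 1"
    and fE: "finite E" and d2: "\<forall>v. deg E v \<le> 2" and c2: "\<forall>e\<in>E. 2 \<le> card e"
    and conn: "\<forall>e\<in>E. graph_connected_on (induced T e) e"
  shows "FP E"
  unfolding FP_def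
proof (intro ballI impI notI)
  fix p q assume p: "p \<in> E" and q: "q \<in> E" and pq: "p \<noteq> q" and pqi: "p \<inter> q \<noteq> {}"
    and path: "(q,p) \<in> (Lrel E - {(p,q),(q,p)})\<^sup>*"
  have fV: "finite V" and Vne: "V \<noteq> {}" and Tsub: "\<forall>f\<in>T. f \<subseteq> V \<and> card f = 2"
    and Tconn: "graph_connected_on T V" and cT: "card T = card V - 1"
    using T unfolding is_tree_def by auto
  have fT: "finite T"
  proof -
    have "T \<subseteq> Pow V" using Tsub by auto
    thus ?thesis using fV by (meson finite_Pow_iff finite_subset)
  qed
  have fin_e: "\<And>e. e \<in> E \<Longrightarrow> finite e" using EV fV by (meson finite_subset)
  obtain z where z: "z \<in> p" "z \<in> q" using pqi by blast
  define F where "F = induced T p"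
  define R where "R = crel (T - F)"
  have FT: "F \<subseteq> T" unfolding F_def induced_def by auto
  have three: "\<And>e f h v. e \<in> E \<Longrightarrow> f \<in> E \<Longrightarrow> h \<in> E \<Longrightarrow> e \<noteq> f \<Longrightarrow> e \<noteq> h \<Longrightarrow> f \<noteq> h
      \<Longrightarrow> v \<in> e \<Longrightarrow> v \<in> f \<Longrightarrow> v \<in> h \<Longrightarrow> False"
  proof -
    fix e f h v assume a: "e \<in> E" "f \<in> E" "h \<in> E" "e \<noteq> f" "e \<noteq> h" "f \<noteq> h" "v \<in> e" "v \<in> f" "v \<in> h"
    have "e \<notin> {f,h}" "f \<notin> {h}" using a by auto
    hence c3: "card {e,f,h} = 3" by simp
    have "{e,f,h} \<subseteq> {x\<in>E. v \<in> x}" using a by auto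
    moreover have "finite {x\<in>E. v \<in> x}" using fE by auto
    ultimately have "card {e,f,h} \<le> deg E v" unfolding deg_def using card_mono by blast
    moreover have "deg E v \<le> 2" using d2 by blast
    ultimately show False using c3 by linarith
  qed
  have gR: "\<And>g u w. g \<in> E \<Longrightarrow> g \<noteq> p \<Longrightarrow> u \<in> g \<Longrightarrow> w \<in> g \<Longrightarrow> (u,w) \<in> R\<^sup>*"
  proof -
    fix g u w assume g: "g \<in> E" "g \<noteq> p" "u \<in> g" "w \<in> g"
    have sub: "{(x,y). {x,y} \<in> induced T g \<and> x \<in> g \<and> y \<in> g} \<subseteq> R"
    proof clarify
      fix x y assume xy: "{x,y} \<in> induced T g" "x \<in> g" "y \<in> g"
      have xyT: "{x,y} \<in> T" using xy unfolding induced_def by auto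
      have "x \<noteq> y" using Tsub xyT by fastforce
      have "{x,y} \<notin> F"
      proof
        assume "{x,y} \<in> F"
        hence "x \<in> p" "y \<in> p" unfolding F_def induced_def by auto
        hence "{x,y} \<subseteq> p \<inter> g" using xy by auto
        hence "card {x,y} \<le> card (p \<inter> g)" using fin_e[OF p] by (intro card_mono) auto
        moreover have "card (p \<inter> g) \<le> 1" using lin p g by auto
        ultimately show False using \<open>x \<noteq> y\<close> by simp
      qed
      thus "(x,y) \<in> R" using xyT unfolding R_def crel_def by auto
    qed
    have "(u,w) \<in> {(x,y). {x,y} \<in> induced T g \<and> x \<in> g \<and> y \<in> g}\<^sup>*"
      using conn g unfolding graph_connected_on_def by auto
    thus "(u,w) \<in> R\<^sup>*" using rtrancl_mono[OF sub] by auto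
  qed
  define R0 where "R0 = Lrel E - {(p,q),(q,p)}"
  have claim: "\<And>e. (q,e) \<in> R0\<^sup>* \<Longrightarrow> e \<in> E \<and> ((\<forall>w\<in>e. (z,w) \<in> R\<^sup>*) \<or> (\<exists>v\<in>p. v \<noteq> z \<and> (z,v) \<in> R\<^sup>*))"
  proof -
    fix e assume "(q,e) \<in> R0\<^sup>*"
    thus "e \<in> E \<and> ((\<forall>w\<in>e. (z,w) \<in> R\<^sup>*) \<or> (\<exists>v\<in>p. v \<noteq> z \<and> (z,v) \<in> R\<^sup>*))"
    proof (induct rule: rtrancl_induct)
      case base
      show ?case using q gR[OF q pq[symmetric] z(2)] by auto
    next
      case (step e e')
      have st: "e \<in> E" "e' \<in> E" "e \<noteq> e'" "e \<inter> e' \<noteq> {}" "(e,e') \<noteq> (p,q)" "(e,e') \<noteq> (q,p)"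
        using step.hyps(2) unfolding R0_def Lrel_def by auto
      from step.hyps(3) have IH: "(\<forall>w\<in>e. (z,w) \<in> R\<^sup>*) \<or> (\<exists>v\<in>p. v \<noteq> z \<and> (z,v) \<in> R\<^sup>*)" by auto
      show ?case
      proof -
        have "(\<forall>w\<in>e'. (z,w) \<in> R\<^sup>*) \<or> (\<exists>v\<in>p. v \<noteq> z \<and> (z,v) \<in> R\<^sup>*)"
        proof (cases "\<forall>w\<in>e. (z,w) \<in> R\<^sup>*")
          case False thus ?thesis using IH by auto
        next
          case True
          obtain w where w: "w \<in> e" "w \<in> e'" using st(4) by blast
          have zw: "(z,w) \<in> R\<^sup>*" using True w by auto
          show ?thesis
          proof (cases "e' = p")
            case False
            have "\<forall>w'\<in>e'. (z,w') \<in> R\<^sup>*"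
              using gR[OF st(2) False w(2)] zw by (meson rtrancl_trans)
            thus ?thesis by auto
          next
            case True
            have ep: "e \<noteq> p" using st(3) True by auto
            have eq: "e \<noteq> q" using st(6) True by auto
            have "w \<noteq> z"
            proof
              assume "w = z"
              thus False using three[OF st(1) p q ep eq pq, of z] w z by auto
            qed
            thus ?thesis using w True zw by auto
          qed
        qed
        thus ?thesis using st(2) by auto
      qed
    qed
  qed
  have "(\<forall>w\<in>p. (z,w) \<in> R\<^sup>*) \<or> (\<exists>v\<in>p. v \<noteq> z \<and> (z,v) \<in> R\<^sup>*)" using claim[of p] path unfolding R0_def by auto
  moreover have "\<exists>v\<in>p. v \<noteq> z"
  proof (rule ccontr)
    assume "\<not> (\<exists>v\<in>p. v \<noteq> z)"
    hence "p \<subseteq> {z}" by auto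
    hence "card p \<le> 1" using card_mono[of "{z}" p] by simp
    thus False using c2 p by auto
  qed
  ultimately obtain v where v: "v \<in> p" "v \<noteq> z" "(z,v) \<in> R\<^sup>*" by blast
  have pV: "p \<subseteq> V" using EV p by auto
  have cover: "\<forall>x\<in>V. \<exists>s\<in>p - {v}. (x,s) \<in> R\<^sup>*"
  proof
    fix x assume x: "x \<in> V"
    have "(z,x) \<in> {(a,b). {a,b} \<in> T \<and> a \<in> V \<and> b \<in> V}\<^sup>*"
      using Tconn x z pV unfolding graph_connected_on_def by auto
    hence "\<exists>s\<in>p. (x,s) \<in> R\<^sup>*"
    proof (induct rule: rtrancl_induct)
      case base thus ?case using z by auto
    next
      case (step y y')
      have yT: "{y,y'} \<in> T" using step.hyps(2) by auto
      show ?case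
      proof (cases "{y,y'} \<in> F")
        case True
        hence "y' \<in> p" unfolding F_def induced_def by auto
        thus ?thesis by auto
      next
        case False
        hence "(y',y) \<in> R" using yT unfolding R_def crel_def by (auto simp: insert_commute)
        thus ?thesis using step.hyps(3) by (meson converse_rtrancl_into_rtrancl)
      qed
    qed
    then obtain s where s: "s \<in> p" "(x,s) \<in> R\<^sup>*" by blast
    show "\<exists>s\<in>p - {v}. (x,s) \<in> R\<^sup>*"
    proof (cases "s = v")
      case False thus ?thesis using s by blast
    next
      case True
      have "(v,z) \<in> R\<^sup>*" unfolding R_def by (rule crel_rtrancl_sym) (use v(3) in \<open>simp add: R_def\<close>)
      hence "(x,z) \<in> R\<^sup>*" using s True by (meson rtrancl_trans)
      thus ?thesis using z v by blast
    qed
  qed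
  have fF: "finite F" using finite_subset[OF FT fT] .
  have c1: "card V \<le> card (T - F) + card (p - {v})"
    using count_conn[of "T - F" V "p - {v}"] fT fV fin_e[OF p] cover unfolding R_def by auto
  have cover2: "\<forall>x\<in>p. \<exists>s\<in>{z}. (x,s) \<in> (crel F)\<^sup>*"
  proof
    fix x assume x: "x \<in> p"
    have "(x,z) \<in> {(a,b). {a,b} \<in> induced T p \<and> a \<in> p \<and> b \<in> p}\<^sup>*"
      using conn p x z unfolding graph_connected_on_def by auto
    moreover have "{(a,b). {a,b} \<in> induced T p \<and> a \<in> p \<and> b \<in> p} \<subseteq> crel F"
      unfolding F_def crel_def by auto
    ultimately have "(x,z) \<in> (crel F)\<^sup>*" using rtrancl_mono by blast
    thus "\<exists>s\<in>{z}. (x,s) \<in> (crel F)\<^sup>*" by auto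
  qed
  have c2': "card p \<le> card F + card {z}"
    using count_conn[of F p "{z}"] fF fin_e[OF p] cover2 by auto
  have a1: "card (T - F) = card T - card F" using card_Diff_subset[OF fF FT] .
  have a2: "card (p - {v}) = card p - 1" using v(1) fin_e[OF p] by simp
  have a3: "card F \<le> card T" using card_mono[OF fT FT] .
  have a4: "card V \<ge> 1" using fV Vne by (simp add: Suc_leI card_gt_0_iff)
  have a5: "card p \<ge> 2" using c2 p by auto
  show False using c1 c2' a1 a2 a3 a4 a5 cT by simp
qed

theorem theorem2:
  fixes V :: "'a set" and E :: "'a set set"
  assumes "hypergraph V E"
    and "E \<noteq> {}"
    and "linear_hg E"
    and "hypertree V E"
    and "max_degree V E = 2"
    and "anti_rank E = 3"
  shows "\<exists>A. acyclic_digraph V A \<and> niche_edges V A = E"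
proof -
  have fV: "finite V" and EV: "\<forall>e\<in>E. e \<subseteq> V \<and> 2 \<le> card e"
    using assms(1) unfolding hypergraph_def by auto
  have fE: "finite E"
  proof -
    have "E \<subseteq> Pow V" using EV by auto
    thus ?thesis using fV by (meson finite_Pow_iff finite_subset)
  qed
  have fe: "\<And>e. e \<in> E \<Longrightarrow> finite e" using EV fV by (meson finite_subset)
  have c3: "\<forall>e\<in>E. 3 \<le> card e"
  proof
    fix e assume e: "e \<in> E"
    have "Min (card ` E) \<le> card e" using fE e by auto
    thus "3 \<le> card e" using assms(6) unfolding anti_rank_def by simp
  qed
  have lin: "\<forall>e\<in>E. \<forall>f\<in>E. e \<noteq> f \<longrightarrow> card (e \<inter> f) \<le> 1" using assms(3) unfolding linear_hg_def by auto
  have hd: "\<And>v. hdegree E v = deg E v" unfolding hdegree_def deg_def by simp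
  have d2: "\<forall>v. deg E v \<le> 2"
  proof
    fix v show "deg E v \<le> 2"
    proof (cases "v \<in> V")
      case True
      have "hdegree E v \<le> Max (hdegree E ` V)" using fV True by auto
      thus ?thesis using assms(5) hd unfolding max_degree_def by simp
    next
      case False
      hence "{e\<in>E. v \<in> e} = {}" using EV by auto
      hence "deg E v = 0" unfolding deg_def by (metis card.empty)
      thus ?thesis by simp
    qed
  qed
  have Vne: "V \<noteq> {}"
  proof -
    obtain e where e: "e \<in> E" using assms(2) by blast
    have "card e \<ge> 2" using EV e by auto
    hence "e \<noteq> {}" by auto
    thus ?thesis using EV e by auto
  qed
  obtain v0 where v0: "v0 \<in> V" "deg E v0 = 2"
  proof -
    have "Max (hdegree E ` V) \<in> hdegree E ` V" using fV Vne by (intro Max_in) auto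
    thus ?thesis using that assms(5) hd unfolding max_degree_def by auto
  qed
  obtain T where T: "is_tree V T" "\<forall>e\<in>E. graph_connected_on (induced T e) e"
    using assms(4) unfolding hypertree_def by blast
  have FPE: "FP E"
    by (rule FP_of_tree[OF T(1)]) (use EV lin fE d2 T(2) in auto)
  define E0 where "E0 = {e\<in>E. nbrs E e \<noteq> {}}"
  have E0E: "E0 \<subseteq> E" unfolding E0_def by auto
  have nE0: "\<And>e. e \<in> E0 \<Longrightarrow> nbrs E0 e = nbrs E e"
  proof -
    fix e assume e: "e \<in> E0"
    have "nbrs E e \<subseteq> E0"
    proof
      fix f assume f: "f \<in> nbrs E e"
      have "e \<in> nbrs E f" using nbrs_sym[OF _ f] e E0E by auto
      thus "f \<in> E0" using f unfolding E0_def nbrs_def by auto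
    qed
    thus "nbrs E0 e = nbrs E e" using nbrs_sub[OF E0E] by auto
  qed
  have CE0: "Cls E0" unfolding Cls_def
  proof (intro conjI)
    show "finite E0" using finite_subset[OF E0E fE] .
    show "\<forall>e\<in>E0. finite e \<and> 3 \<le> card e" using c3 fe E0E by auto
    show "\<forall>e\<in>E0. \<forall>f\<in>E0. e \<noteq> f \<longrightarrow> card (e \<inter> f) \<le> 1" using lin E0E by auto
    have "deg E0 v \<le> deg E v" for v unfolding deg_def using E0E fE by (intro card_mono) auto
    thus "\<forall>v. deg E0 v \<le> 2" using d2 le_trans by blast
    show "FP E0" using FP_mono[OF FPE E0E] .
    show "\<forall>e\<in>E0. nbrs E0 e \<noteq> {}" using nE0 unfolding E0_def by auto
  qed
  obtain g0 where g0: "g0 \<in> E0"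
  proof -
    have "card {e\<in>E. v0 \<in> e} = 2" using v0 unfolding deg_def by simp
    then obtain e f where ef: "{e\<in>E. v0 \<in> e} = {e,f}" "e \<noteq> f" by (meson card_2_iff)
    hence "e \<in> E" "f \<in> E" "v0 \<in> e" "v0 \<in> f" by blast+
    hence "f \<in> nbrs E e" using ef(2) unfolding nbrs_def by auto
    hence "e \<in> E0" using \<open>e \<in> E\<close> unfolding E0_def by auto
    thus ?thesis using that by blast
  qed
  obtain A0 where A0: "sol (\<Union>E0) E0 A0" using main[OF CE0 g0] by blast
  define E1 where "E1 = E - E0"
  have iso: "\<And>s f. s \<in> E1 \<Longrightarrow> f \<in> E \<Longrightarrow> f \<noteq> s \<Longrightarrow> f \<inter> s = {}"
    unfolding E1_def E0_def nbrs_def by auto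
  have U0: "\<Union>E0 \<noteq> {}"
  proof -
    have "card g0 \<ge> 2" using EV g0 E0E by auto
    hence "g0 \<noteq> {}" by auto
    thus ?thesis using g0 by auto
  qed
  have fE1: "finite E1" using fE unfolding E1_def by auto
  have ind: "\<exists>A. sol (\<Union>E0 \<union> \<Union>E1) (E0 \<union> E1) A"
    using fE1 subset_refl
  proof (induction E1 rule: finite_subset_induct')
    case empty thus ?case using A0 by auto
  next
    case (insert s S)
    obtain A where A: "sol (\<Union>E0 \<union> \<Union>S) (E0 \<union> S) A" using insert.IH by blast
    have sE: "s \<in> E" "s \<notin> E0" using insert.hyps unfolding E1_def by auto
    have SE: "S \<subseteq> E" using insert.hyps unfolding E1_def by auto
    have d: "s \<inter> (\<Union>E0 \<union> \<Union>S) = {}"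
    proof -
      have "\<forall>e\<in>E0 \<union> S. e \<inter> s = {}"
      proof
        fix e assume e: "e \<in> E0 \<union> S"
        have "e \<noteq> s" using e sE insert.hyps by auto
        thus "e \<inter> s = {}" using iso[OF insert.hyps(2)] e E0E SE by auto
      qed
      thus ?thesis by blast
    qed
    have "\<Union>E0 \<union> \<Union>S \<noteq> {}" using U0 by auto
    then obtain A' where "sol (\<Union>E0 \<union> \<Union>S \<union> s) (insert s (E0 \<union> S)) A'"
      using add_iso[OF A _ d fe[OF sE(1)]] EV sE by blast
    moreover have "\<Union>E0 \<union> \<Union>S \<union> s = \<Union>E0 \<union> \<Union>(insert s S)" by auto
    moreover have "insert s (E0 \<union> S) = E0 \<union> insert s S" by auto
    ultimately show ?case by metis
  qed
  have "E0 \<union> E1 = E" using E0E unfolding E1_def by auto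
  then obtain A where A: "sol (\<Union>E) E A" using ind by (metis Union_Un_distrib)
  have "\<Union>E \<subseteq> V" using EV by auto
  thus ?thesis using sol_final[OF A] by blast
qed


end
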